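(* Let $G$ be a finite simple connected graph. Then $c_{\infty}(G)=1$ if and only if every block of $G$ has domination number one and $G$ has no hallway.
   Context: Cops and Robber with an infinitely fast robber: the game is played on a graph $G$. A set of cops first choose initial vertices (several cops may share a vertex); then the robber, knowing their positions, chooses a vertex. Then the players move in alternating rounds, cops first. In the cops' turn each cop either stays or moves to an adjacent vertex; in the robber's turn she either stays or moves along any path of $G$ starting at her current vertex that contains no vertex currently occupied by a cop. The cops win if at some point a cop moves to the vertex occupied by the robber; otherwise the robber wins. $c_{\infty}(G)$ is the minimum number of cops for which the cops have a strategy that guarantees a win. A block of a connected graph $G$ is either a maximal 2-connected subgraph of $G$ or an edge of $G$ not contained in any 2-connected subgraph. The block tree $B(G)$ is the bipartite graph whose vertices are the blocks and the cut vertices of $G$, a block $B$ and cut vertex $v$ being adjacent iff $v\in V(B)$; it is a tree. A block $B$ has domination number one if some vertex $x\in V(B)$ has every other vertex of $B$ adjacent to $x$. If $u$ is a cut vertex of $G$ and $B$ a block containing $u$ such that $\{u\}$ is not a dominating set of $B$ (some vertex of $B$ is neither $u$ nor adjacent to $u$), then $(B,u)$ is called a directed hole. For two distinct blocks $B,B'$ with unique $(B,B')$-path $B\,u_1\cdots u_k\,B'$ in $B(G)$, the pair $\{B,B'\}$ is a hallway if both $(B,u_1)$ and $(B',u_k)$ are directed holes. *)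

theory Defs
  imports Main
begin

definition simple_graph :: "'a set \<Rightarrow> ('a \<Rightarrow> 'a \<Rightarrow> bool) \<Rightarrow> bool" where
  "simple_graph V E \<longleftrightarrow> finite V \<and> (\<forall>x y. E x y \<longrightarrow> x \<in> V \<and> y \<in> V)
     \<and> (\<forall>x y. E x y \<longrightarrow> E y x) \<and> (\<forall>x. \<not> E x x)"

definition induced :: "('a \<Rightarrow> 'a \<Rightarrow> bool) \<Rightarrow> 'a set \<Rightarrow> 'a \<Rightarrow> 'a \<Rightarrow> bool" where
  "induced E S x y \<longleftrightarrow> E x y \<and> x \<in> S \<and> y \<in> S"

definition connected_on :: "('a \<Rightarrow> 'a \<Rightarrow> bool) \<Rightarrow> 'a set \<Rightarrow> bool" where
  "connected_on E S \<longleftrightarrow> S \<noteq> {} \<and> (\<forall>x\<in>S. \<forall>y\<in>S. (induced E S)\<^sup>*\<^sup>* x y)"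

definition connected_graph :: "'a set \<Rightarrow> ('a \<Rightarrow> 'a \<Rightarrow> bool) \<Rightarrow> bool" where
  "connected_graph V E \<longleftrightarrow> connected_on E V"

definition two_connected_on :: "('a \<Rightarrow> 'a \<Rightarrow> bool) \<Rightarrow> 'a set \<Rightarrow> bool" where
  "two_connected_on E S \<longleftrightarrow> finite S \<and> card S \<ge> 3 \<and> connected_on E S
     \<and> (\<forall>x\<in>S. connected_on E (S - {x}))"

text \<open>Blocks, represented by their vertex sets (a maximal 2-connected subgraph is induced;
a bridge block is the induced subgraph on the two ends of the edge). A 2-connected
subgraph contains the edge uv iff the induced subgraph on its vertex set does.\<close>
definition is_block :: "'a set \<Rightarrow> ('a \<Rightarrow> 'a \<Rightarrow> bool) \<Rightarrow> 'a set \<Rightarrow> bool" where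
  "is_block V E B \<longleftrightarrow>
     (B \<subseteq> V \<and> two_connected_on E B \<and> (\<forall>B'. B \<subset> B' \<and> B' \<subseteq> V \<longrightarrow> \<not> two_connected_on E B'))
   \<or> (\<exists>u v. B = {u, v} \<and> E u v \<and>
        (\<forall>S. S \<subseteq> V \<and> u \<in> S \<and> v \<in> S \<longrightarrow> \<not> two_connected_on E S))"

definition cut_vertex :: "'a set \<Rightarrow> ('a \<Rightarrow> 'a \<Rightarrow> bool) \<Rightarrow> 'a \<Rightarrow> bool" where
  "cut_vertex V E v \<longleftrightarrow> v \<in> V \<and>
     (\<exists>x\<in>V - {v}. \<exists>y\<in>V - {v}. \<not> (induced E (V - {v}))\<^sup>*\<^sup>* x y)"

definition block_tree_adj :: "'a set \<Rightarrow> ('a \<Rightarrow> 'a \<Rightarrow> bool) \<Rightarrow> ('a set + 'a) \<Rightarrow> ('a set + 'a) \<Rightarrow> bool" where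
  "block_tree_adj V E X Y \<longleftrightarrow>
     (\<exists>B v. ((X = Inl B \<and> Y = Inr v) \<or> (X = Inr v \<and> Y = Inl B))
             \<and> is_block V E B \<and> cut_vertex V E v \<and> v \<in> B)"

definition block_tree_path :: "'a set \<Rightarrow> ('a \<Rightarrow> 'a \<Rightarrow> bool) \<Rightarrow> ('a set + 'a) list
     \<Rightarrow> ('a set + 'a) \<Rightarrow> ('a set + 'a) \<Rightarrow> bool" where
  "block_tree_path V E p X Y \<longleftrightarrow> p \<noteq> [] \<and> hd p = X \<and> last p = Y \<and> distinct p
     \<and> successively (block_tree_adj V E) p"

definition dom_number_one :: "('a \<Rightarrow> 'a \<Rightarrow> bool) \<Rightarrow> 'a set \<Rightarrow> bool" where
  "dom_number_one E B \<longleftrightarrow> (\<exists>x\<in>B. \<forall>y\<in>B. y \<noteq> x \<longrightarrow> E x y)"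

definition directed_hole :: "'a set \<Rightarrow> ('a \<Rightarrow> 'a \<Rightarrow> bool) \<Rightarrow> 'a set \<Rightarrow> 'a \<Rightarrow> bool" where
  "directed_hole V E B u \<longleftrightarrow> cut_vertex V E u \<and> is_block V E B \<and> u \<in> B
     \<and> (\<exists>w\<in>B. w \<noteq> u \<and> \<not> E u w)"

definition is_hallway :: "'a set \<Rightarrow> ('a \<Rightarrow> 'a \<Rightarrow> bool) \<Rightarrow> 'a set \<Rightarrow> 'a set \<Rightarrow> bool" where
  "is_hallway V E B B' \<longleftrightarrow> is_block V E B \<and> is_block V E B' \<and> B \<noteq> B' \<and>
     (\<exists>p u1 uk. block_tree_path V E p (Inl B) (Inl B') \<and>
        p ! 1 = Inr u1 \<and> p ! (length p - 2) = Inr uk \<and>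
        directed_hole V E B u1 \<and> directed_hole V E B' uk)"

definition has_hallway :: "'a set \<Rightarrow> ('a \<Rightarrow> 'a \<Rightarrow> bool) \<Rightarrow> bool" where
  "has_hallway V E \<longleftrightarrow> (\<exists>B B'. is_hallway V E B B')"

text \<open>Cop positions of k cops: a function nat \<Rightarrow> 'a, of which indices < k are used.
Each cop stays or moves to an adjacent vertex.\<close>
definition cop_step :: "('a \<Rightarrow> 'a \<Rightarrow> bool) \<Rightarrow> nat \<Rightarrow> (nat \<Rightarrow> 'a) \<Rightarrow> (nat \<Rightarrow> 'a) \<Rightarrow> bool" where
  "cop_step E k c c' \<longleftrightarrow> (\<forall>i<k. c' i = c i \<or> E (c i) (c' i))"

definition robber_step :: "('a \<Rightarrow> 'a \<Rightarrow> bool) \<Rightarrow> 'a set \<Rightarrow> 'a \<Rightarrow> 'a \<Rightarrow> bool" where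
  "robber_step E C r r' \<longleftrightarrow> r' = r \<or> (\<lambda>x y. E x y \<and> x \<notin> C \<and> y \<notin> C)\<^sup>+\<^sup>+ r r'"

text \<open>k cops win: there are initial positions c0 and a strategy sigma (mapping the
history r_0,...,r_{n-1} of robber positions to the cops' positions after round n) such that
against every robber play (r 0 in V, chosen knowing c0), the cops move legally and at some
round n capture the robber (a cop lands on r_{n-1}), unless the robber moved illegally first.\<close>
definition cops_win :: "'a set \<Rightarrow> ('a \<Rightarrow> 'a \<Rightarrow> bool) \<Rightarrow> nat \<Rightarrow> bool" where
  "cops_win V E k \<longleftrightarrow> (\<exists>(c0 :: nat \<Rightarrow> 'a) (\<sigma> :: 'a list \<Rightarrow> nat \<Rightarrow> 'a).
     (\<forall>i<k. c0 i \<in> V) \<and>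
     (\<forall>r :: nat \<Rightarrow> 'a. r 0 \<in> V \<longrightarrow>
        (let c = (\<lambda>n. if n = 0 then c0 else \<sigma> (map r [0..<n])) in
         \<exists>n\<ge>1. (\<forall>m\<in>{1..n}. cop_step E k (c (m - 1)) (c m)) \<and>
               ((\<exists>i<k. c n i = r (n - 1)) \<or>
                \<not> robber_step E (c n ` {..<k}) (r (n - 1)) (r n)))))"

definition c_inf :: "'a set \<Rightarrow> ('a \<Rightarrow> 'a \<Rightarrow> bool) \<Rightarrow> nat" where
  "c_inf V E = (LEAST k. cops_win V E k)"

end

theory Submission
  imports Defs
begin


locale sgraph =
  fixes V :: "'a set" and E :: "'a \<Rightarrow> 'a \<Rightarrow> bool"
  assumes finV: "finite V"
    and inV: "E x y \<Longrightarrow> x \<in> V \<and> y \<in> V"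
    and symE: "E x y \<Longrightarrow> E y x"
    and irrE: "\<not> E x x"
begin

abbreviation cn :: "'a set \<Rightarrow> 'a \<Rightarrow> 'a \<Rightarrow> bool" where
  "cn S x y \<equiv> (induced E S)\<^sup>*\<^sup>* x y"

definition comp :: "'a set \<Rightarrow> 'a \<Rightarrow> 'a set" where
  "comp S x = {y. cn S x y}"

lemma induced_sym: "induced E S x y \<Longrightarrow> induced E S y x"
  by (auto simp: induced_def symE)

lemma cn_sym: "cn S x y \<Longrightarrow> cn S y x"
proof (induction rule: rtranclp_induct)
  case base then show ?case by simp
next
  case (step y z)
  then show ?case by (metis converse_rtranclp_into_rtranclp induced_sym)
qed

lemma cn_trans: "cn S x y \<Longrightarrow> cn S y z \<Longrightarrow> cn S x z"
  by (rule rtranclp_trans)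

lemma cn_mono: "cn S x y \<Longrightarrow> S \<subseteq> T \<Longrightarrow> cn T x y"
proof (induction rule: rtranclp_induct)
  case base then show ?case by simp
next
  case (step y z)
  then have "induced E T y z" by (auto simp: induced_def)
  with step show ?case using rtranclp.rtrancl_into_rtrancl by metis
qed

lemma cn_edge: "E x y \<Longrightarrow> x \<in> S \<Longrightarrow> y \<in> S \<Longrightarrow> cn S x y"
  by (auto simp: induced_def)

lemma cn_in: "cn S x y \<Longrightarrow> x \<noteq> y \<Longrightarrow> x \<in> S \<and> y \<in> S"
proof (induction rule: rtranclp_induct)
  case base then show ?case by simp
next
  case (step y z)
  then show ?case by (cases "x = y") (auto simp: induced_def)
qed

lemma cn_inS: "cn S x y \<Longrightarrow> x \<in> S \<Longrightarrow> y \<in> S"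
  using cn_in by blast

lemma cn_inV: "cn S x y \<Longrightarrow> x \<in> V \<Longrightarrow> y \<in> V"
proof (induction rule: rtranclp_induct)
  case base then show ?case by simp
next
  case (step y z)
  then show ?case using inV by (auto simp: induced_def)
qed

lemma cn_within: "cn S x y \<Longrightarrow> cn (S \<inter> comp S x) x y"
proof (induction rule: rtranclp_induct)
  case base then show ?case by simp
next
  case (step y z)
  then have "cn S x z" using rtranclp.rtrancl_into_rtrancl by metis
  then have "y \<in> comp S x" "z \<in> comp S x" using step(1) by (auto simp: comp_def)
  with step(2) have "induced E (S \<inter> comp S x) y z"
    by (auto simp: induced_def)
  with step show ?case using rtranclp.rtrancl_into_rtrancl by metis
qed

lemma cn_avoid: "cn S x y \<Longrightarrow> comp S x \<inter> S \<subseteq> T \<Longrightarrow> cn T x y"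
  using cn_mono cn_within by (metis inf_commute)

lemma comp_self: "x \<in> comp S x" by (simp add: comp_def)

lemma comp_eq: "y \<in> comp S x \<Longrightarrow> comp S y = comp S x"
  unfolding comp_def using cn_sym cn_trans by blast

lemma comp_sub: "x \<in> S \<Longrightarrow> comp S x \<subseteq> S"
  unfolding comp_def using cn_inS by blast

lemma comp_disj: "y \<notin> comp S x \<Longrightarrow> comp S x \<inter> comp S y = {}"
  unfolding comp_def using cn_sym cn_trans by blast

lemma connected_onI: "S \<noteq> {} \<Longrightarrow> (\<And>x y. x \<in> S \<Longrightarrow> y \<in> S \<Longrightarrow> cn S x y) \<Longrightarrow> connected_on E S"
  by (simp add: connected_on_def)

lemma comp_connected: "x \<in> S \<Longrightarrow> connected_on E (comp S x)"
proof (rule connected_onI)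
  show "comp S x \<noteq> {}" using comp_self by blast
next
  fix y z assume y: "y \<in> comp S x" and z: "z \<in> comp S x"
  then have "cn S y z" unfolding comp_def using cn_sym cn_trans by blast
  then have "cn (S \<inter> comp S y) y z" by (rule cn_within)
  moreover have "comp S y = comp S x" using y comp_eq by blast
  ultimately show "cn (comp S x) y z" using cn_mono by blast
qed

lemma connected_sub_comp:
  assumes "connected_on E T" "T \<subseteq> S" "z \<in> T" "z \<in> comp S x"
  shows "T \<subseteq> comp S x"
proof
  fix y assume "y \<in> T"
  then have "cn T z y" using assms by (simp add: connected_on_def)
  then have "cn S z y" using assms cn_mono by blast
  then show "y \<in> comp S x" using assms unfolding comp_def using cn_trans by blast
qed

lemma connected_union:
  assumes "connected_on E X" "connected_on E Y"
    and "X \<inter> Y \<noteq> {} \<or> (\<exists>x\<in>X. \<exists>y\<in>Y. E x y)"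
  shows "connected_on E (X \<union> Y)"
proof (rule connected_onI)
  show "X \<union> Y \<noteq> {}" using assms by (simp add: connected_on_def)
  obtain x0 y0 where x0: "x0 \<in> X" "y0 \<in> Y" "cn (X \<union> Y) x0 y0"
    using assms(3)
  proof
    assume "X \<inter> Y \<noteq> {}" then obtain z where "z \<in> X" "z \<in> Y" by blast
    then show ?thesis using that by blast
  next
    assume "\<exists>x\<in>X. \<exists>y\<in>Y. E x y"
    then obtain x y where "x \<in> X" "y \<in> Y" "E x y" by blast
    then show ?thesis using that cn_edge by blast
  qed
  have cx: "cn (X \<union> Y) a b" if "a \<in> X" "b \<in> X" for a b
    using that assms(1) cn_mono[of X a b] by (auto simp: connected_on_def)
  have cy: "cn (X \<union> Y) a b" if "a \<in> Y" "b \<in> Y" for a b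
    using that assms(2) cn_mono[of Y a b] by (auto simp: connected_on_def)
  fix a b assume a: "a \<in> X \<union> Y" and b: "b \<in> X \<union> Y"
  have ax: "cn (X \<union> Y) a x0" if "a \<in> X \<union> Y" for a
  proof (cases "a \<in> X")
    case True then show ?thesis using cx x0 by blast
  next
    case False then have "a \<in> Y" using that by blast
    then have "cn (X \<union> Y) a y0" using cy x0 by blast
    then show ?thesis using x0 cn_sym cn_trans by blast
  qed
  show "cn (X \<union> Y) a b" using ax[OF a] ax[OF b] cn_sym cn_trans by blast
qed

lemma connected_union2:
  assumes "connected_on E X" "Y = {} \<or> (connected_on E Y \<and> (X \<inter> Y \<noteq> {} \<or> (\<exists>x\<in>X. \<exists>y\<in>Y. E x y)))"
  shows "connected_on E (X \<union> Y)"
proof (cases "Y = {}")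
  case True then show ?thesis using assms by simp
next
  case False then show ?thesis using assms connected_union by blast
qed

end


lemma successively_take: "successively R xs \<Longrightarrow> successively R (take n xs)"
  using successively_append_iff[of R "take n xs" "drop n xs"] by simp

lemma successively_drop: "successively R xs \<Longrightarrow> successively R (drop n xs)"
  using successively_append_iff[of R "take n xs" "drop n xs"] by simp

lemma rtranclp_path:
  assumes "R\<^sup>*\<^sup>* x y"
  shows "\<exists>xs. xs \<noteq> [] \<and> hd xs = x \<and> last xs = y \<and> distinct xs \<and> successively R xs"
  using assms
proof (induction rule: rtranclp_induct)
  case base
  then show ?case by (intro exI[of _ "[x]"]) auto
next
  case (step y z)
  then obtain xs where xs: "xs \<noteq> []" "hd xs = x" "last xs = y" "distinct xs" "successively R xs"
    by blast
  show ?case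
  proof (cases "z \<in> set xs")
    case True
    then obtain i where i: "i < length xs" "xs ! i = z" by (metis in_set_conv_nth)
    let ?ys = "take (Suc i) xs"
    have "?ys = take i xs @ [z]" using i by (simp add: take_Suc_conv_app_nth)
    then have "last ?ys = z" by simp
    moreover have "?ys \<noteq> []" using xs by simp
    moreover have "hd ?ys = x" using xs by simp
    moreover have "distinct ?ys" using xs by simp
    moreover have "successively R ?ys" using xs successively_take by blast
    ultimately show ?thesis by blast
  next
    case False
    have "successively R (xs @ [z])" using xs step(2)
      by (simp add: successively_append_iff)
    moreover have "distinct (xs @ [z])" using xs False by simp
    ultimately show ?thesis using xs
      by (intro exI[of _ "xs @ [z]"]) auto
  qed
qed

context sgraph begin

lemma path_in_set: "successively (induced E Q) xs \<Longrightarrow> xs \<noteq> [] \<Longrightarrow> hd xs \<in> Q \<Longrightarrow> set xs \<subseteq> Q"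
proof (induction xs)
  case Nil then show ?case by simp
next
  case (Cons a xs)
  then show ?case by (cases xs) (auto simp: induced_def)
qed

lemma path_connected: "xs \<noteq> [] \<Longrightarrow> successively E xs \<Longrightarrow> connected_on E (set xs)"
proof (induction xs)
  case Nil then show ?case by simp
next
  case (Cons a xs)
  show ?case
  proof (cases "xs = []")
    case True then show ?thesis
      by (auto simp: connected_on_def)
  next
    case False
    then have "connected_on E (set xs)" "E a (hd xs)" using Cons by (auto simp: successively_Cons)
    moreover have "connected_on E {a}" by (auto simp: connected_on_def)
    moreover have "hd xs \<in> set xs" using False by simp
    ultimately have "connected_on E ({a} \<union> set xs)"
      using connected_union[of "{a}" "set xs"] by blast
    then show ?thesis by simp
  qed
qed

definition w2c :: "'a set \<Rightarrow> bool" where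
  "w2c S \<longleftrightarrow> connected_on E S \<and> (\<forall>z\<in>S. connected_on E (S - {z}))"

definition blk :: "'a set \<Rightarrow> bool" where
  "blk B \<longleftrightarrow> B \<subseteq> V \<and> w2c B \<and> (\<forall>S. S \<subseteq> V \<longrightarrow> B \<subseteq> S \<longrightarrow> w2c S \<longrightarrow> S = B)"

lemma w2c_remove: "w2c S \<Longrightarrow> connected_on E (S - {z})"
  unfolding w2c_def by (cases "z \<in> S") auto

lemma w2c_conn: "w2c S \<Longrightarrow> connected_on E S"
  unfolding w2c_def by auto

lemma w2c_two: assumes "w2c S" "x \<in> S" shows "\<exists>y\<in>S. y \<noteq> x"
proof -
  have "S - {x} \<noteq> {}" using assms w2c_remove[OF assms(1), of x] by (auto simp: connected_on_def)
  then show ?thesis by blast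
qed

lemma w2c_nbr: assumes "w2c S" "x \<in> S" shows "\<exists>y\<in>S. E x y"
proof -
  obtain y where y: "y \<in> S" "y \<noteq> x" using w2c_two assms by blast
  have "cn S x y" using assms y w2c_conn by (auto simp: connected_on_def)
  then show ?thesis using y(2)
  proof (induction rule: converse_rtranclp_induct)
    case base then show ?case by simp
  next
    case (step a b)
    then show ?case by (auto simp: induced_def)
  qed
qed

lemma connected_two_edge: assumes "connected_on E {u, v}" "u \<noteq> v" shows "E u v"
proof -
  have "cn {u, v} u v" using assms by (auto simp: connected_on_def)
  then show ?thesis using assms(2)
  proof (induction rule: converse_rtranclp_induct)
    case base then show ?case by simp
  next
    case (step a b)
    then show ?case using symE irrE by (auto simp: induced_def)
  qed
qed

lemma two_conn_w2c: "two_connected_on E S \<Longrightarrow> w2c S"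
  unfolding two_connected_on_def w2c_def by auto

lemma w2c_two_conn: "w2c S \<Longrightarrow> finite S \<Longrightarrow> card S \<ge> 3 \<Longrightarrow> two_connected_on E S"
  unfolding two_connected_on_def w2c_def by auto

lemma edge_w2c: assumes "E u v" shows "w2c {u, v}"
proof -
  have uv: "u \<noteq> v" using assms irrE by auto
  have c: "connected_on E {u, v}"
    using assms symE by (auto simp: connected_on_def induced_def intro!: r_into_rtranclp)
  moreover have "connected_on E ({u, v} - {z})" if "z \<in> {u, v}" for z
    using uv that by (cases "z = u") (auto simp: connected_on_def)
  ultimately show ?thesis unfolding w2c_def by auto
qed

lemma w2c_fin: "S \<subseteq> V \<Longrightarrow> finite S" using finV finite_subset by blast

lemma is_block_blk: "is_block V E B \<longleftrightarrow> blk B"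
proof
  assume "is_block V E B"
  then consider (a) "B \<subseteq> V" "two_connected_on E B" "\<forall>B'. B \<subset> B' \<and> B' \<subseteq> V \<longrightarrow> \<not> two_connected_on E B'"
    | (b) u v where "B = {u, v}" "E u v" "\<forall>S. S \<subseteq> V \<and> u \<in> S \<and> v \<in> S \<longrightarrow> \<not> two_connected_on E S"
    unfolding is_block_def by blast
  then show "blk B"
  proof cases
    case a
    have "S = B" if "S \<subseteq> V" "B \<subseteq> S" "w2c S" for S
    proof (rule ccontr)
      assume "S \<noteq> B"
      then have "B \<subset> S" using that by blast
      moreover have "card B \<ge> 3" using a by (simp add: two_connected_on_def)
      moreover have "card B \<le> card S" using that w2c_fin card_mono by blast
      ultimately have "two_connected_on E S" using w2c_two_conn that w2c_fin by auto
      then show False using a \<open>B \<subset> S\<close> that by blast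
    qed
    moreover have "w2c B" using a two_conn_w2c by blast
    ultimately show ?thesis unfolding blk_def using a(1) by blast
  next
    case b
    have "S = B" if "S \<subseteq> V" "B \<subseteq> S" "w2c S" for S
    proof (rule ccontr)
      assume "S \<noteq> B"
      then have "B \<subset> S" using that by blast
      then have "card B < card S" using that w2c_fin psubset_card_mono by blast
      moreover have "card B = 2" using b irrE by (auto simp: card_insert_if)
      ultimately have "two_connected_on E S" using w2c_two_conn that w2c_fin by auto
      then show False using b that by blast
    qed
    moreover have "B \<subseteq> V" using b inV by auto
    moreover have "w2c B" using b edge_w2c by simp
    ultimately show ?thesis unfolding blk_def by blast
  qed
next
  assume bl: "blk B"
  then have BV: "B \<subseteq> V" and w: "w2c B" and mx: "\<And>S. S \<subseteq> V \<Longrightarrow> B \<subseteq> S \<Longrightarrow> w2c S \<Longrightarrow> S = B"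
    unfolding blk_def by auto
  have fB: "finite B" using BV w2c_fin by blast
  obtain x where x: "x \<in> B" using w unfolding w2c_def connected_on_def by blast
  obtain y where y: "y \<in> B" "y \<noteq> x" using w2c_two[OF w x] by blast
  show "is_block V E B"
  proof (cases "card B \<ge> 3")
    case True
    then have "two_connected_on E B" using w2c_two_conn w fB by blast
    moreover have "\<not> two_connected_on E B'" if "B \<subset> B'" "B' \<subseteq> V" for B'
      using mx[of B'] that two_conn_w2c by blast
    ultimately show ?thesis unfolding is_block_def using BV by (intro disjI1) blast
  next
    case False
    have "card {x, y} \<le> card B" using x y fB by (intro card_mono) auto
    then have "card B = 2" using False y by auto
    then have B: "B = {x, y}"
    proof -
      have "{x, y} \<subseteq> B" using x y by blast
      moreover have "card {x, y} = 2" using y by simp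
      ultimately show ?thesis using card_subset_eq[OF fB] \<open>card B = 2\<close> by metis
    qed
    then have "E x y" using connected_two_edge[of x y] w2c_conn[OF w] y by simp
    moreover have "\<not> two_connected_on E S" if "S \<subseteq> V" "x \<in> S" "y \<in> S" for S
    proof
      assume "two_connected_on E S"
      then have "S = B" using mx[of S] that B two_conn_w2c by blast
      then show False using \<open>two_connected_on E S\<close> \<open>card B = 2\<close> by (simp add: two_connected_on_def)
    qed
    ultimately show ?thesis unfolding is_block_def by (intro disjI2 exI[of _ x] exI[of _ y]) (simp add: B)
  qed
qed

lemma blk_sub: "blk B \<Longrightarrow> B \<subseteq> V" by (simp add: blk_def)
lemma blk_w2c: "blk B \<Longrightarrow> w2c B" by (simp add: blk_def)
lemma blk_max: "blk B \<Longrightarrow> S \<subseteq> V \<Longrightarrow> B \<subseteq> S \<Longrightarrow> w2c S \<Longrightarrow> S = B" by (simp add: blk_def)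

lemma edge_blk: assumes "E u v" shows "\<exists>B. blk B \<and> u \<in> B \<and> v \<in> B"
proof -
  define F where "F = {S. S \<subseteq> V \<and> w2c S \<and> {u, v} \<subseteq> S}"
  have "F \<subseteq> Pow V" unfolding F_def by blast
  then have fF: "finite F" using finV finite_subset by blast
  have uv: "{u, v} \<in> F" unfolding F_def using assms edge_w2c inV by simp
  obtain M where M1: "M \<in> F" and M2: "\<forall>S\<in>F. M \<subseteq> S \<longrightarrow> M = S"
    using finite_has_maximal[OF fF] uv by blast
  have MV: "M \<subseteq> V" "w2c M" "u \<in> M" "v \<in> M" using M1 unfolding F_def by auto
  have "S = M" if "S \<subseteq> V" "M \<subseteq> S" "w2c S" for S
  proof -
    have "S \<in> F" unfolding F_def using that MV by blast
    then show ?thesis using M2 that by blast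
  qed
  then have "blk M" unfolding blk_def using MV by blast
  then show ?thesis using MV by blast
qed

lemma w2c_union:
  assumes "w2c X" "w2c Y" "x \<in> X" "x \<in> Y" "y \<in> X" "y \<in> Y" "x \<noteq> y"
  shows "w2c (X \<union> Y)"
  unfolding w2c_def
proof (intro conjI ballI)
  show "connected_on E (X \<union> Y)" using assms connected_union w2c_conn by blast
next
  fix z
  have "(X \<union> Y) - {z} = (X - {z}) \<union> (Y - {z})" by blast
  moreover have "(X - {z}) \<inter> (Y - {z}) \<noteq> {}" using assms by blast
  ultimately show "connected_on E (X \<union> Y - {z})"
    using connected_union w2c_remove assms by metis
qed

lemma blk_share: assumes "blk B" "blk C" "x \<in> B" "x \<in> C" "y \<in> B" "y \<in> C" "x \<noteq> y"
  shows "B = C"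
proof -
  have "w2c (B \<union> C)" using w2c_union assms blk_w2c by blast
  moreover have "B \<union> C \<subseteq> V" using assms blk_sub by blast
  ultimately have "B \<union> C = B" "B \<union> C = C" using blk_max assms by blast+
  then show ?thesis by blast
qed

lemma w2c_insert:
  assumes "w2c X" "c \<notin> X" "x1 \<in> X" "x2 \<in> X" "x1 \<noteq> x2" "E c x1" "E c x2"
  shows "w2c (insert c X)"
  unfolding w2c_def
proof (intro conjI ballI)
  have cc: "connected_on E {c}" by (auto simp: connected_on_def)
  show "connected_on E (insert c X)"
    using connected_union[OF w2c_conn[OF assms(1)] cc] assms symE by auto
next
  fix z assume "z \<in> insert c X"
  show "connected_on E (insert c X - {z})"
  proof (cases "z = c")
    case True then show ?thesis using assms w2c_conn by auto
  next
    case False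
    then have eq: "insert c X - {z} = (X - {z}) \<union> {c}" using assms by blast
    have cc: "connected_on E {c}" by (auto simp: connected_on_def)
    have "\<exists>a\<in>X - {z}. \<exists>b\<in>{c}. E a b" using assms symE by (cases "z = x1") auto
    then show ?thesis using eq connected_union[OF w2c_remove[OF assms(1)] cc] by auto
  qed
qed

lemma blk_out_nbr: assumes "blk B" "c \<notin> B" "x1 \<in> B" "x2 \<in> B" "E c x1" "E c x2"
  shows "x1 = x2"
proof (rule ccontr)
  assume "x1 \<noteq> x2"
  then have "w2c (insert c B)" using w2c_insert assms blk_w2c by blast
  moreover have "insert c B \<subseteq> V" using assms blk_sub inV by blast
  ultimately have "insert c B = B" using blk_max assms by blast
  then show False using assms by blast
qed

lemma ear:
  assumes B: "blk B" and QB: "Q \<subseteq> V - B" and Qc: "connected_on E Q"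
    and q: "q1 \<in> Q" "q2 \<in> Q" and x: "x1 \<in> B" "x2 \<in> B" "x1 \<noteq> x2" and e: "E q1 x1" "E q2 x2"
  shows False
proof -
  have "cn Q q1 q2" using Qc q by (simp add: connected_on_def)
  then obtain xs where xs: "xs \<noteq> []" "hd xs = q1" "last xs = q2" "distinct xs"
    "successively (induced E Q) xs" using rtranclp_path[OF \<open>cn Q q1 q2\<close>] by blast
  have sxQ: "set xs \<subseteq> Q" using path_in_set xs q by blast
  have sE: "successively E xs" using xs(5) by (rule successively_mono) (simp add: induced_def)
  let ?P = "set xs"
  have Pc: "connected_on E ?P" using path_connected xs sE by blast
  have q1P: "q1 \<in> ?P" "q2 \<in> ?P" using xs by auto
  have wB: "w2c B" using B blk_w2c by blast
  have "w2c (B \<union> ?P)"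
    unfolding w2c_def
  proof (intro conjI ballI)
    have "\<exists>a\<in>B. \<exists>b\<in>?P. E a b" using x e q1P symE by blast
    then show "connected_on E (B \<union> ?P)"
      using connected_union[OF w2c_conn[OF wB] Pc] by blast
  next
    fix z assume "z \<in> B \<union> ?P"
    show "connected_on E (B \<union> ?P - {z})"
    proof (cases "z \<in> ?P")
      case False
      then have eq: "B \<union> ?P - {z} = (B - {z}) \<union> ?P" by blast
      have "\<exists>a\<in>B - {z}. \<exists>b\<in>?P. E a b" using x e q1P symE False
        by (cases "z = x1") auto
      then show ?thesis using eq connected_union[OF w2c_remove[OF wB] Pc] by auto
    next
      case True
      then obtain i where i: "i < length xs" "xs ! i = z" by (metis in_set_conv_nth)
      let ?A = "set (take i xs)" and ?C = "set (drop (Suc i) xs)"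
      have dec: "xs = take i xs @ z # drop (Suc i) xs" using id_take_nth_drop[OF i(1), unfolded i(2)] .
      have "distinct (take i xs @ z # drop (Suc i) xs)" using xs(4) by (simp only: dec[symmetric])
      then have zn: "z \<notin> ?A" "z \<notin> ?C" by auto
      have "set (take i xs @ z # drop (Suc i) xs) = ?A \<union> {z} \<union> ?C" by auto
      then have "?P = ?A \<union> {z} \<union> ?C" by (simp only: dec[symmetric])
      moreover have "z \<notin> B" using True sxQ QB by blast
      ultimately have eq: "B \<union> ?P - {z} = (B \<union> ?A) \<union> ?C" using zn by blast
      have BA: "connected_on E (B \<union> ?A)"
      proof (rule connected_union2[OF w2c_conn[OF wB]])
        show "?A = {} \<or> connected_on E ?A \<and> (B \<inter> ?A \<noteq> {} \<or> (\<exists>a\<in>B. \<exists>b\<in>?A. E a b))"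
        proof (cases "i = 0")
          case True then show ?thesis by simp
        next
          case False
          then have "take i xs \<noteq> []" "hd (take i xs) = q1" using xs i by auto
          moreover have "successively E (take i xs)" using sE successively_take by blast
          ultimately have "connected_on E ?A" "q1 \<in> ?A" using path_connected hd_in_set by metis+
          then show ?thesis using x e symE by blast
        qed
      qed
      show ?thesis unfolding eq
      proof (rule connected_union2[OF BA])
        show "?C = {} \<or> connected_on E ?C \<and> ((B \<union> ?A) \<inter> ?C \<noteq> {} \<or> (\<exists>a\<in>B \<union> ?A. \<exists>b\<in>?C. E a b))"
        proof (cases "drop (Suc i) xs = []")
          case True then show ?thesis by simp
        next
          case False
          then have "Suc i < length xs" by simp
          then have "last (drop (Suc i) xs) = q2" using xs by simp
          moreover have "successively E (drop (Suc i) xs)" using sE successively_drop by blast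
          ultimately have "connected_on E ?C" "q2 \<in> ?C" using path_connected False last_in_set by metis+
          then show ?thesis using x e symE by blast
        qed
      qed
    qed
  qed
  moreover have "B \<union> ?P \<subseteq> V" using B blk_sub sxQ QB by blast
  ultimately have "B \<union> ?P = B" using blk_max B by blast
  then show False using q1P sxQ QB q by blast
qed

end


lemma bta_LR: "block_tree_adj V E (Inl B) (Inr v) \<longleftrightarrow> is_block V E B \<and> cut_vertex V E v \<and> v \<in> B"
  unfolding block_tree_adj_def by blast
lemma bta_RL: "block_tree_adj V E (Inr v) (Inl B) \<longleftrightarrow> is_block V E B \<and> cut_vertex V E v \<and> v \<in> B"
  unfolding block_tree_adj_def by blast
lemma bta_LL: "\<not> block_tree_adj V E (Inl B) (Inl B')"
  unfolding block_tree_adj_def by blast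
lemma bta_RR: "\<not> block_tree_adj V E (Inr u) (Inr v)"
  unfolding block_tree_adj_def by blast
lemma bta_sym: "block_tree_adj V E X Y \<Longrightarrow> block_tree_adj V E Y X"
  unfolding block_tree_adj_def by blast

locale cgraph = sgraph +
  assumes conG: "\<And>x y. x \<in> V \<Longrightarrow> y \<in> V \<Longrightarrow> (induced E V)\<^sup>*\<^sup>* x y"
begin

lemma first_hit_aux:
  assumes "cn S x y" "x \<notin> B"
  shows "(cn (S - B) x y \<and> y \<notin> B) \<or> (\<exists>b\<in>B \<inter> S. \<exists>q. cn (S - B) x q \<and> E q b)"
  using assms
proof (induction rule: rtranclp_induct)
  case base then show ?case by simp
next
  case (step y z)
  from step.IH[OF step.prems] show ?case
  proof
    assume h: "cn (S - B) x y \<and> y \<notin> B"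
    have yz: "E y z" "y \<in> S" "z \<in> S" using step(2) by (auto simp: induced_def)
    show ?thesis
    proof (cases "z \<in> B")
      case True then show ?thesis using h yz by blast
    next
      case False
      then have "induced E (S - B) y z" using yz h by (auto simp: induced_def)
      then have "cn (S - B) x z" using h by (meson rtranclp.rtrancl_into_rtrancl)
      then show ?thesis using False by blast
    qed
  next
    assume "\<exists>b\<in>B \<inter> S. \<exists>q. cn (S - B) x q \<and> E q b"
    then show ?thesis by blast
  qed
qed

lemma first_hit:
  assumes "cn S x y" "x \<notin> B" "y \<in> B"
  shows "\<exists>b\<in>B \<inter> S. \<exists>q. cn (S - B) x q \<and> E q b"
  using first_hit_aux[OF assms(1,2)] assms(3) by blast

lemma blk_ne: assumes "blk B" shows "\<exists>b. b \<in> B"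
proof -
  have "connected_on E B" using blk_w2c[OF assms] w2c_conn by blast
  then have "B \<noteq> {}" by (simp add: connected_on_def)
  then show ?thesis by blast
qed

lemma gate:
  assumes B: "blk B" and r: "r \<in> V" "r \<notin> B"
  shows "\<exists>g\<in>B. cn (V - (B - {g})) r g \<and> comp (V - {g}) r \<inter> B = {}"
proof -
  obtain b0 where b0: "b0 \<in> B" using blk_ne B by blast
  have "cn V r b0" using conG r b0 B blk_sub by blast
  from first_hit[OF this r(2) b0] obtain g q where g: "g \<in> B" "cn (V - B) r q" "E q g"
    by blast
  have sub: "V - B \<subseteq> V - (B - {g})" by blast
  have "cn (V - (B - {g})) r q" using cn_mono[OF g(2) sub] .
  moreover have "cn (V - (B - {g})) q g"
  proof (rule cn_edge[OF g(3)])
    have rVB: "r \<in> V - B" using r by blast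
    have "q \<in> comp (V - B) r" using g(2) by (simp add: comp_def)
    then have "q \<in> V - B" using comp_sub[OF rVB] by blast
    then show "q \<in> V - (B - {g})" using sub by blast
    show "g \<in> V - (B - {g})" using g B blk_sub by blast
  qed
  ultimately have c1: "cn (V - (B - {g})) r g"
    using cn_trans by blast
  have c2: "comp (V - {g}) r \<inter> B = {}"
  proof (rule ccontr)
    assume "comp (V - {g}) r \<inter> B \<noteq> {}"
    then obtain b where b: "b \<in> B" "cn (V - {g}) r b" by (auto simp: comp_def)
    from first_hit[OF b(2) r(2) b(1)] obtain b' q' where
      b': "b' \<in> B" "b' \<in> V - {g}" "cn (V - {g} - B) r q'" "E q' b'" by blast
    let ?Q = "comp (V - B) r"
    have rVB: "r \<in> V - B" using r by blast
    have "connected_on E ?Q" using comp_connected[OF rVB] .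
    moreover have "?Q \<subseteq> V - B" using comp_sub[OF rVB] .
    moreover have "q \<in> ?Q" using g by (simp add: comp_def)
    moreover have "q' \<in> ?Q"
    proof -
      have "V - {g} - B \<subseteq> V - B" by blast
      from cn_mono[OF b'(3) this] show ?thesis by (simp add: comp_def)
    qed
    moreover have "g \<noteq> b'" using b' by blast
    ultimately show False using ear[OF B, of ?Q q q' g b'] g(1,3) b'(1,4) by blast
  qed
  show ?thesis using c1 c2 g by blast
qed

lemma blocks_sep:
  assumes B: "blk B" and C: "blk C" and BC: "B \<noteq> C" and u: "u \<in> B" "u \<in> C"
    and w: "w \<in> B" "w \<noteq> u"
  shows "C \<inter> comp (V - {u}) w = {}"
proof (rule ccontr)
  assume "C \<inter> comp (V - {u}) w \<noteq> {}"
  then obtain c where c: "c \<in> C" "cn (V - {u}) w c" by (auto simp: comp_def)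
  have wV: "w \<in> V" using w B blk_sub by blast
  have cu: "c \<noteq> u" using cn_inS[OF c(2)] wV w by blast
  have cB: "c \<notin> B" using blk_share[OF B C u(1) u(2) _ c(1) cu[symmetric]] BC by blast
  have cV: "c \<in> V" using c C blk_sub by blast
  let ?Q = "comp (V - B) c"
  have cVB: "c \<in> V - B" using cV cB by blast
  have Qc: "connected_on E ?Q" using comp_connected[OF cVB] .
  have QVB: "?Q \<subseteq> V - B" using comp_sub[OF cVB] .
  have CB: "C - {u} \<subseteq> V - B"
  proof
    fix x assume x: "x \<in> C - {u}"
    then have "x \<notin> B" using blk_share[OF B C u(1) u(2), of x] BC by blast
    then show "x \<in> V - B" using x C blk_sub by blast
  qed
  have CQ: "C - {u} \<subseteq> ?Q"
    using connected_sub_comp[OF w2c_remove[OF blk_w2c[OF C]] CB, of c c] c cu comp_self by blast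
  obtain y where y: "y \<in> C" "E u y" using w2c_nbr[OF blk_w2c[OF C] u(2)] by blast
  have "y \<noteq> u" using y irrE by blast
  then have yQ: "y \<in> ?Q" using CQ y by blast
  have "cn (V - {u}) c w" using c cn_sym by blast
  from first_hit[OF this cB w(1)] obtain b' q' where
    b': "b' \<in> B" "b' \<in> V - {u}" "cn (V - {u} - B) c q'" "E q' b'" by blast
  have "q' \<in> ?Q"
  proof -
    have "V - {u} - B \<subseteq> V - B" by blast
    from cn_mono[OF b'(3) this] show ?thesis by (simp add: comp_def)
  qed
  then show False using ear[OF B QVB Qc yQ, of q' u b'] u b' y symE by blast
qed

lemma two_blocks_cut:
  assumes B: "blk B" and C: "blk C" and BC: "B \<noteq> C" and u: "u \<in> B" "u \<in> C"
  shows "cut_vertex V E u"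
proof -
  obtain w where w: "w \<in> B" "w \<noteq> u" using w2c_two[OF blk_w2c[OF B] u(1)] by blast
  obtain c where c: "c \<in> C" "c \<noteq> u" using w2c_two[OF blk_w2c[OF C] u(2)] by blast
  have "c \<notin> comp (V - {u}) w" using blocks_sep[OF B C BC u w] c by blast
  then have "\<not> cn (V - {u}) w c" by (simp add: comp_def)
  moreover have "w \<in> V - {u}" "c \<in> V - {u}" "u \<in> V" using w c u B C blk_sub by blast+
  ultimately show ?thesis unfolding cut_vertex_def by blast
qed

lemma path_sep:
  assumes B: "blk B" and BB': "B \<noteq> B'" and p: "block_tree_path V E p (Inl B) (Inl B')"
    and p1: "p ! 1 = Inr u" and w: "w \<in> B" "w \<noteq> u"
  shows "B' \<inter> comp (V - {u}) w = {}"
proof -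
  let ?S = "comp (V - {u}) w"
  have pne: "p \<noteq> []" and hd: "hd p = Inl B" and lst: "last p = Inl B'" and dp: "distinct p"
    and sp: "successively (block_tree_adj V E) p"
    using p unfolding block_tree_path_def by auto
  have p0: "p ! 0 = Inl B" using hd pne by (simp add: hd_conv_nth)
  have l1: "length p \<ge> 2"
  proof (rule ccontr)
    assume "\<not> length p \<ge> 2"
    moreover have "length p \<noteq> 0" using pne by simp
    ultimately have "length p = 1" by linarith
    then have "last p = p ! 0" using last_conv_nth[OF pne] by simp
    then show False using p0 lst BB' by simp
  qed
  have l3: "length p \<ge> 3"
  proof (rule ccontr)
    assume "\<not> length p \<ge> 3"
    then have "length p = 2" using l1 by auto
    then have "last p = p ! 1" using last_conv_nth[OF pne] by simp
    then show False using p1 lst by simp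
  qed
  have adj: "block_tree_adj V E (p ! i) (p ! Suc i)" if "Suc i < length p" for i
    using successively_nth[OF sp that] .
  have wV: "w \<in> V" using w B blk_sub by blast
  have SV: "?S \<subseteq> V - {u}" using comp_sub[of w "V - {u}"] wV w by blast
  have claim: "(\<forall>C. p ! j = Inl C \<longrightarrow> C \<inter> ?S = {}) \<and> (\<forall>x. p ! j = Inr x \<longrightarrow> x \<notin> ?S)"
    if "2 \<le> j" "j < length p" for j
    using that
  proof (induction j)
    case 0 then show ?case by simp
  next
    case (Suc j)
    show ?case
    proof (cases "j = 1")
      case True
      have a: "block_tree_adj V E (Inr u) (p ! 2)" using adj[of 1] Suc True p1 by (simp add: numeral_2_eq_2)
      then obtain C where C: "p ! 2 = Inl C" "is_block V E C" "u \<in> C"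
        unfolding block_tree_adj_def by blast
      have "p ! 2 \<noteq> p ! 0" using nth_eq_iff_index_eq[OF dp, of 2 0] l3 pne by simp
      then have "C \<noteq> B" using C p0 by auto
      have "block_tree_adj V E (p ! 0) (p ! Suc 0)" using adj[of 0] l1 by simp
      then have uB: "u \<in> B" using p0 p1 by (simp add: bta_LR)
      have Cb: "blk C" using C is_block_blk by blast
      have "C \<inter> ?S = {}"
        using blocks_sep[OF B Cb _ uB C(3) w] \<open>C \<noteq> B\<close> by blast
      then show ?thesis using True C by (simp add: numeral_2_eq_2)
    next
      case False
      then have j2: "2 \<le> j" using Suc by auto
      have IH: "(\<forall>C. p ! j = Inl C \<longrightarrow> C \<inter> ?S = {}) \<and> (\<forall>x. p ! j = Inr x \<longrightarrow> x \<notin> ?S)"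
        using Suc j2 by auto
      have a: "block_tree_adj V E (p ! j) (p ! Suc j)" using adj Suc by blast
      then obtain C x where Cx: "(p ! j = Inl C \<and> p ! Suc j = Inr x) \<or> (p ! j = Inr x \<and> p ! Suc j = Inl C)"
        "is_block V E C" "x \<in> C"
        unfolding block_tree_adj_def by blast
      from Cx(1) show ?thesis
      proof
        assume h: "p ! j = Inl C \<and> p ! Suc j = Inr x"
        then show ?thesis using IH Cx by auto
      next
        assume h: "p ! j = Inr x \<and> p ! Suc j = Inl C"
        then have xS: "x \<notin> ?S" using IH by auto
        have "p ! j \<noteq> p ! 1" using nth_eq_iff_index_eq[OF dp, of j 1] j2 Suc by simp
        then have xu: "x \<noteq> u" using h p1 by auto
        have "C \<inter> ?S = {}"
        proof (rule ccontr)
          assume "C \<inter> ?S \<noteq> {}"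
          then obtain c where c: "c \<in> C" "c \<in> ?S" by blast
          have cu: "c \<noteq> u" using c SV by blast
          have Cb: "blk C" using Cx is_block_blk by blast
          have "cn (C - {u}) c x"
            using w2c_remove[OF blk_w2c[OF Cb], of u] c cu Cx xu by (auto simp: connected_on_def)
          moreover have "C - {u} \<subseteq> V - {u}" using Cb blk_sub by blast
          ultimately have "cn (V - {u}) c x" by (rule cn_mono)
          then have "x \<in> ?S" using c by (auto simp: comp_def intro: cn_trans)
          then show False using xS by blast
        qed
        then show ?thesis using h by simp
      qed
    qed
  qed
  have "p ! (length p - 1) = Inl B'" using lst pne by (simp add: last_conv_nth)
  then show ?thesis using claim[of "length p - 1"] l3 by auto
qed

end


primrec hist :: "'a \<Rightarrow> ('a list \<Rightarrow> 'a) \<Rightarrow> nat \<Rightarrow> 'a list" where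
  "hist r0 f 0 = [r0]"
| "hist r0 f (Suc n) = hist r0 f n @ [f (hist r0 f n)]"

lemma hist_len: "length (hist r0 f n) = Suc n"
  by (induction n) auto

lemma hist_nth: "i \<le> n \<Longrightarrow> hist r0 f n ! i = hist r0 f i ! i"
proof (induction n)
  case 0 then show ?case by simp
next
  case (Suc n)
  show ?case
  proof (cases "i = Suc n")
    case True then show ?thesis by simp
  next
    case False
    then have "i \<le> n" using Suc by simp
    then have "hist r0 f (Suc n) ! i = hist r0 f n ! i"
      using hist_len[of r0 f n] by (simp add: nth_append)
    then show ?thesis using Suc.IH \<open>i \<le> n\<close> by simp
  qed
qed

lemma hist_map: "hist r0 f n = map (\<lambda>i. hist r0 f i ! i) [0..<Suc n]"
proof (rule nth_equalityI)
  show "length (hist r0 f n) = length (map (\<lambda>i. hist r0 f i ! i) [0..<Suc n])"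
    by (simp add: hist_len)
next
  fix i assume "i < length (hist r0 f n)"
  then have "i \<le> n" by (simp add: hist_len)
  then show "hist r0 f n ! i = map (\<lambda>i. hist r0 f i ! i) [0..<Suc n] ! i"
    using hist_nth[of i n r0 f] by (simp del: upt_Suc)
qed

lemma cops_win_card:
  assumes "finite V" shows "cops_win V E (card V)"
proof -
  obtain h where h: "bij_betw h {0..<card V} V" using ex_bij_betw_nat_finite[OF assms] by blast
  have hV: "\<forall>i<card V. h i \<in> V" using h by (auto simp: bij_betw_def)
  have surj: "\<exists>i<card V. h i = x" if "x \<in> V" for x
  proof -
    have "x \<in> h ` {0..<card V}" using h that by (simp add: bij_betw_def)
    then show ?thesis by auto
  qed
  show ?thesis unfolding cops_win_def
  proof (intro exI[of _ h] exI[of _ "\<lambda>_. h"] conjI allI impI)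
    fix i assume "i < card V" then show "h i \<in> V" using hV by blast
  next
    fix r :: "nat \<Rightarrow> 'a" assume r0: "r 0 \<in> V"
    have "(\<forall>m\<in>{1..1::nat}. cop_step E (card V) h h) \<and> (\<exists>i<card V. h i = r (1 - 1))"
      using surj[OF r0] by (simp add: cop_step_def)
    then show "let c = \<lambda>n. if n = 0 then h else h in \<exists>n\<ge>1. (\<forall>m\<in>{1..n}. cop_step E (card V) (c (m - 1)) (c m)) \<and>
           ((\<exists>i<card V. c n i = r (n - 1)) \<or> \<not> robber_step E (c n ` {..<card V}) (r (n - 1)) (r n))"
      unfolding Let_def by (intro exI[of _ 1]) auto
  qed
qed

lemma not_cops_win0:
  assumes "V \<noteq> {}" shows "\<not> cops_win V E 0"
proof
  assume "cops_win V E 0"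
  then obtain c0 :: "nat \<Rightarrow> 'a" and \<sigma> where
    W: "\<forall>r :: nat \<Rightarrow> 'a. r 0 \<in> V \<longrightarrow>
        (let c = (\<lambda>n. if n = 0 then c0 else \<sigma> (map r [0..<n])) in
         \<exists>n\<ge>1. (\<forall>m\<in>{1..n}. cop_step E 0 (c (m - 1)) (c m)) \<and>
               ((\<exists>i<0. c n i = r (n - 1)) \<or>
                \<not> robber_step E (c n ` {..<0}) (r (n - 1)) (r n)))"
    unfolding cops_win_def by blast
  obtain v where v: "v \<in> V" using assms by blast
  from W[rule_format, of "\<lambda>_. v"] v show False
    by (simp add: Let_def robber_step_def)
qed

lemma c_inf_1:
  assumes "finite V" "V \<noteq> {}"
  shows "c_inf V E = 1 \<longleftrightarrow> cops_win V E 1"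
proof
  assume h: "c_inf V E = 1"
  have "cops_win V E (LEAST k. cops_win V E k)"
    using cops_win_card[OF assms(1)] by (rule LeastI)
  then show "cops_win V E 1" using h by (simp add: c_inf_def)
next
  assume h: "cops_win V E 1"
  have "(LEAST k. cops_win V E k) = 1"
  proof (rule Least_equality)
    show "cops_win V E 1" using h .
  next
    fix k assume "cops_win V E k"
    then show "1 \<le> k" using not_cops_win0[OF assms(2)] by (cases k) auto
  qed
  then show "c_inf V E = 1" by (simp add: c_inf_def)
qed

context sgraph begin

lemma robber_wins:
  fixes Inv :: "'a \<Rightarrow> 'a \<Rightarrow> bool"
  assumes i: "\<And>c. c \<in> V \<Longrightarrow> \<exists>r. Inv c r"
    and ii: "\<And>c r. Inv c r \<Longrightarrow> c \<noteq> r \<and> \<not> E c r"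
    and iii: "\<And>c r c'. Inv c r \<Longrightarrow> c' = c \<or> E c c' \<Longrightarrow> \<exists>r'. robber_step E {c'} r r' \<and> Inv c' r'"
    and iv: "\<And>c r. Inv c r \<Longrightarrow> r \<in> V"
  shows "\<not> cops_win V E 1"
proof
  assume "cops_win V E 1"
  then obtain c0 :: "nat \<Rightarrow> 'a" and \<sigma> where
    c0V: "c0 0 \<in> V" and
    W: "\<forall>r :: nat \<Rightarrow> 'a. r 0 \<in> V \<longrightarrow>
        (let c = (\<lambda>n. if n = 0 then c0 else \<sigma> (map r [0..<n])) in
         \<exists>n\<ge>1. (\<forall>m\<in>{1..n}. cop_step E 1 (c (m - 1)) (c m)) \<and>
               ((\<exists>i<1. c n i = r (n - 1)) \<or>
                \<not> robber_step E (c n ` {..<1}) (r (n - 1)) (r n)))"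
    unfolding cops_win_def by blast
  define cp where "cp h = (if h = [] then c0 0 else \<sigma> h 0)" for h
  define nx where "nx c c' x = (if (c' = c \<or> E c c') \<and> Inv c x
      then (SOME x'. robber_step E {c'} x x' \<and> Inv c' x') else x)" for c c' x
  define r0 where "r0 = (SOME x. Inv (c0 0) x)"
  define f where "f h = nx (cp (butlast h)) (cp h) (last h)" for h
  define r where "r n = hist r0 f n ! n" for n
  define c where "c = (\<lambda>n. if n = 0 then c0 else \<sigma> (map r [0..<n]))"
  have hm: "map r [0..<Suc n] = hist r0 f n" for n
    unfolding r_def using hist_map[of r0 f n] by simp
  have c0': "c n 0 = cp (map r [0..<n])" for n
    unfolding c_def cp_def by (cases n) auto
  have cS: "c (Suc n) 0 = cp (hist r0 f n)" for n using c0'[of "Suc n"] hm by simp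
  have cn': "c n 0 = cp (butlast (hist r0 f n))" for n
  proof -
    have "hist r0 f n = map r [0..<n] @ [r n]" using hm[of n] by simp
    then have "butlast (hist r0 f n) = map r [0..<n]" by simp
    then show ?thesis using c0'[of n] by simp
  qed
  have rS: "r (Suc n) = nx (c n 0) (c (Suc n) 0) (r n)" for n
  proof -
    have "r (Suc n) = f (hist r0 f n)"
      unfolding r_def using hist_len[of r0 f n] by (simp add: nth_append)
    moreover have "last (hist r0 f n) = r n"
    proof -
      have "hist r0 f n \<noteq> []" using hist_len[of r0 f n] by auto
      then show ?thesis unfolding r_def using last_conv_nth[of "hist r0 f n"] hist_len[of r0 f n] by simp
    qed
    moreover have "f (hist r0 f n) = nx (cp (butlast (hist r0 f n))) (cp (hist r0 f n)) (last (hist r0 f n))"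
      by (rule f_def)
    ultimately show ?thesis using cS[of n] cn'[of n] by simp
  qed
  have r0': "r 0 = r0" unfolding r_def by simp
  have inv: "(\<forall>m\<in>{1..n}. cop_step E 1 (c (m - 1)) (c m)) \<longrightarrow>
      Inv (c n 0) (r n) \<and> (n \<ge> 1 \<longrightarrow> robber_step E {c n 0} (r (n - 1)) (r n))" for n
  proof (induction n)
    case 0
    have "\<exists>x. Inv (c0 0) x" using i c0V by blast
    then have "Inv (c0 0) r0" unfolding r0_def by (rule someI_ex)
    then show ?case using r0' by (simp add: c_def)
  next
    case (Suc n)
    show ?case
    proof
      assume L: "\<forall>m\<in>{1..Suc n}. cop_step E 1 (c (m - 1)) (c m)"
      then have "\<forall>m\<in>{1..n}. cop_step E 1 (c (m - 1)) (c m)" by auto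
      then have I: "Inv (c n 0) (r n)" using Suc by blast
      have "Suc n \<in> {1..Suc n}" by simp
      then have "cop_step E 1 (c (Suc n - 1)) (c (Suc n))" using L by blast
      then have "cop_step E 1 (c n) (c (Suc n))" by simp
      then have st: "c (Suc n) 0 = c n 0 \<or> E (c n 0) (c (Suc n) 0)" by (simp add: cop_step_def)
      have ex: "\<exists>x'. robber_step E {c (Suc n) 0} (r n) x' \<and> Inv (c (Suc n) 0) x'"
        using iii[OF I st] .
      have "r (Suc n) = (SOME x'. robber_step E {c (Suc n) 0} (r n) x' \<and> Inv (c (Suc n) 0) x')"
        using rS[of n] I st unfolding nx_def by simp
      then have "robber_step E {c (Suc n) 0} (r n) (r (Suc n)) \<and> Inv (c (Suc n) 0) (r (Suc n))"
        using someI_ex[OF ex] by simp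
      then show "Inv (c (Suc n) 0) (r (Suc n)) \<and> (Suc n \<ge> 1 \<longrightarrow> robber_step E {c (Suc n) 0} (r (Suc n - 1)) (r (Suc n)))"
        by simp
    qed
  qed
  have "r 0 \<in> V" using inv[of 0] iv by simp
  with spec[OF W, of r] have "let c = (\<lambda>n. if n = 0 then c0 else \<sigma> (map r [0..<n])) in
         \<exists>n\<ge>1. (\<forall>m\<in>{1..n}. cop_step E 1 (c (m - 1)) (c m)) \<and>
               ((\<exists>i<1. c n i = r (n - 1)) \<or>
                \<not> robber_step E (c n ` {..<1}) (r (n - 1)) (r n))" by (rule mp)
  then have "\<exists>n\<ge>1. (\<forall>m\<in>{1..n}. cop_step E 1 (c (m - 1)) (c m)) \<and>
               ((\<exists>i<1. c n i = r (n - 1)) \<or>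
                \<not> robber_step E (c n ` {..<1}) (r (n - 1)) (r n))"
    unfolding Let_def c_def[symmetric] .
  then obtain n where n: "n \<ge> 1" "\<forall>m\<in>{1..n}. cop_step E 1 (c (m - 1)) (c m)"
    "(\<exists>i<1. c n i = r (n - 1)) \<or> \<not> robber_step E (c n ` {..<1}) (r (n - 1)) (r n)"
    by blast
  obtain m where m: "n = Suc m" using n(1) by (cases n) auto
  have "\<forall>k\<in>{1..m}. cop_step E 1 (c (k - 1)) (c k)" using n(2) m by auto
  then have Im: "Inv (c m 0) (r m)" using inv by blast
  have In: "robber_step E {c n 0} (r (n - 1)) (r n)" using inv[of n] n by blast
  have "n \<in> {1..n}" using n(1) by simp
  then have "cop_step E 1 (c (n - 1)) (c n)" using n(2) by blast
  then have "cop_step E 1 (c m) (c n)" using m by simp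
  then have st: "c n 0 = c m 0 \<or> E (c m 0) (c n 0)" by (simp add: cop_step_def)
  have "c n ` {..<1} = {c n 0}" by auto
  have "\<not> (\<exists>i<1. c n i = r (n - 1))" using ii[OF Im] st m by auto
  moreover have "robber_step E (c n ` {..<1}) (r (n - 1)) (r n)" using In \<open>c n ` {..<1} = {c n 0}\<close> by simp
  ultimately show False using n(3) by blast
qed

end


context sgraph begin

inductive win :: "'a \<Rightarrow> 'a \<Rightarrow> bool" where
  cap: "v = r \<or> E v r \<Longrightarrow> win v r"
| mv: "E v v' \<Longrightarrow> v' \<noteq> r \<Longrightarrow> (\<And>r'. robber_step E {v'} r r' \<Longrightarrow> win v' r') \<Longrightarrow> win v r"

fun winn :: "nat \<Rightarrow> 'a \<Rightarrow> 'a \<Rightarrow> bool" where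
  "winn 0 v r = (v = r \<or> E v r)"
| "winn (Suc n) v r = (winn n v r \<or> (\<exists>v'. E v v' \<and> v' \<noteq> r \<and> (\<forall>r'. robber_step E {v'} r r' \<longrightarrow> winn n v' r')))"

lemma winn_mono: "winn m v r \<Longrightarrow> m \<le> n \<Longrightarrow> winn n v r"
proof (induction n arbitrary: v r)
  case 0 then show ?case by simp
next
  case (Suc n)
  show ?case
  proof (cases "m = Suc n")
    case True then show ?thesis using Suc by simp
  next
    case False then have "m \<le> n" using Suc by simp
    then show ?thesis using Suc by simp
  qed
qed

lemma tranclp_last: "R\<^sup>+\<^sup>+ x y \<Longrightarrow> \<exists>z. R z y"
  by (induction rule: tranclp_induct) auto

lemma robber_step_V: "robber_step E C r r' \<Longrightarrow> r' = r \<or> r' \<in> V"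
  unfolding robber_step_def using tranclp_last[of "\<lambda>x y. E x y \<and> x \<notin> C \<and> y \<notin> C" r r'] inV by blast

lemma win_winn: "win v r \<Longrightarrow> \<exists>n. winn n v r"
proof (induction rule: win.induct)
  case (cap v r)
  then show ?case by (intro exI[of _ 0]) simp
next
  case (mv v v' r)
  define A where "A = {r'. robber_step E {v'} r r'}"
  have "A \<subseteq> insert r V" unfolding A_def using robber_step_V by blast
  then have fA: "finite A" using finV finite_subset by blast
  have rA: "r \<in> A" unfolding A_def by (simp add: robber_step_def)
  have "\<forall>x\<in>A. \<exists>n. winn n v' x" using mv.IH unfolding A_def by blast
  then obtain g where g: "\<forall>x\<in>A. winn (g x) v' x" by metis
  define N where "N = Max (g ` A)"
  have "\<forall>x\<in>A. winn N v' x"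
  proof
    fix x assume x: "x \<in> A"
    then have "g x \<le> N" unfolding N_def using fA by simp
    then show "winn N v' x" using g x winn_mono by blast
  qed
  then have "winn (Suc N) v r" using mv.hyps unfolding A_def by auto
  then show ?case by blast
qed

definition rk :: "'a \<Rightarrow> 'a \<Rightarrow> nat" where
  "rk v r = (LEAST n. winn n v r)"

definition nxt :: "'a \<Rightarrow> 'a \<Rightarrow> 'a" where
  "nxt v r = (if v = r \<or> E v r then r else
     (SOME v'. E v v' \<and> v' \<noteq> r \<and> (\<forall>r'. robber_step E {v'} r r' \<longrightarrow> winn (rk v r - 1) v' r')))"

lemma nxt_prop:
  assumes "winn n v r" "\<not> (v = r \<or> E v r)"
  shows "E v (nxt v r) \<and> nxt v r \<noteq> r \<and> (\<forall>r'. robber_step E {nxt v r} r r' \<longrightarrow> winn (rk v r - 1) (nxt v r) r') \<and> rk v r > 0"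
proof -
  have k: "winn (rk v r) v r" unfolding rk_def using assms(1) by (rule LeastI)
  have "rk v r \<noteq> 0" using k assms(2) by (cases "rk v r") auto
  then obtain j where j: "rk v r = Suc j" by (cases "rk v r") auto
  have "\<not> winn j v r"
  proof
    assume "winn j v r"
    then have "rk v r \<le> j" unfolding rk_def by (rule Least_le)
    then show False using j by simp
  qed
  then have ex: "\<exists>v'. E v v' \<and> v' \<noteq> r \<and> (\<forall>r'. robber_step E {v'} r r' \<longrightarrow> winn (rk v r - 1) v' r')"
    using k j by simp
  have "nxt v r = (SOME v'. E v v' \<and> v' \<noteq> r \<and> (\<forall>r'. robber_step E {v'} r r' \<longrightarrow> winn (rk v r - 1) v' r'))"
    unfolding nxt_def using assms(2) by simp
  then show ?thesis using someI_ex[OF ex] j by simp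
qed

lemma rk_less: "winn (rk v r - 1) v' r' \<Longrightarrow> rk v r > 0 \<Longrightarrow> rk v' r' < rk v r"
proof -
  assume a: "winn (rk v r - 1) v' r'" "rk v r > 0"
  have "rk v' r' \<le> rk v r - 1" unfolding rk_def[of v' r'] using a(1) by (rule Least_le)
  then show ?thesis using a(2) by simp
qed

lemma cop_wins:
  assumes c0V: "c0 \<in> V" and W: "\<And>r. r \<in> V \<Longrightarrow> \<exists>n. winn n c0 r"
  shows "cops_win V E 1"
  unfolding cops_win_def
proof (intro exI[of _ "\<lambda>_. c0"] exI[of _ "\<lambda>h _. foldl nxt c0 h"] conjI allI impI)
  fix i :: nat assume "i < 1" then show "c0 \<in> V" using c0V by simp
next
  fix r :: "nat \<Rightarrow> 'a" assume r0: "r 0 \<in> V"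
  define C where "C m = foldl nxt c0 (map r [0..<m])" for m
  define c where "c = (\<lambda>n::nat. if n = 0 then (\<lambda>_::nat. c0) else (\<lambda>_. foldl nxt c0 (map r [0..<n])))"
  have cC: "c m = (\<lambda>_. C m)" for m unfolding c_def C_def by (cases m) auto
  have CS: "C (Suc m) = nxt (C m) (r m)" for m unfolding C_def by simp
  have legal1: "cop_step E 1 (c m) (c (Suc m))" if "C (Suc m) = C m \<or> E (C m) (C (Suc m))" for m
    using that cC by (simp add: cop_step_def)
  have main: "\<And>m. rk (C m) (r m) = k \<Longrightarrow> (\<exists>n. winn n (C m) (r m)) \<Longrightarrow>
      (\<forall>i\<in>{1..m}. cop_step E 1 (c (i - 1)) (c i)) \<Longrightarrow>
      \<exists>n\<ge>1. (\<forall>i\<in>{1..n}. cop_step E 1 (c (i - 1)) (c i)) \<and>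
        ((\<exists>i<1. c n i = r (n - 1)) \<or> \<not> robber_step E (c n ` {..<1}) (r (n - 1)) (r n))" for k
  proof (induction k rule: less_induct)
    case (less k m)
    from less.prems(2) obtain n0 where n0: "winn n0 (C m) (r m)" by blast
    have ext: "\<forall>i\<in>{1..Suc m}. cop_step E 1 (c (i - 1)) (c i)"
      if "cop_step E 1 (c m) (c (Suc m))"
    proof
      fix i assume "i \<in> {1..Suc m}"
      then consider "i \<in> {1..m}" | "i = Suc m" by fastforce
      then show "cop_step E 1 (c (i - 1)) (c i)"
        by cases (use less.prems(3) that in auto)
    qed
    have img: "c n ` {..<1} = {C n}" for n using cC by auto
    show ?case
    proof (cases "C m = r m \<or> E (C m) (r m)")
      case True
      then have "C (Suc m) = r m" using CS nxt_def by simp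
      then have "C (Suc m) = C m \<or> E (C m) (C (Suc m))" using True by auto
      then have L: "cop_step E 1 (c m) (c (Suc m))" by (rule legal1)
      have "\<exists>i<1. c (Suc m) i = r (Suc m - 1)" using cC \<open>C (Suc m) = r m\<close> by simp
      then show ?thesis using ext[OF L] by (intro exI[of _ "Suc m"]) simp
    next
      case False
      note P = nxt_prop[OF n0 False]
      have L: "cop_step E 1 (c m) (c (Suc m))" using legal1 P CS by simp
      show ?thesis
      proof (cases "robber_step E {C (Suc m)} (r m) (r (Suc m))")
        case False
        then show ?thesis using ext[OF L] img by (intro exI[of _ "Suc m"]) simp
      next
        case True
        then have w: "winn (rk (C m) (r m) - 1) (C (Suc m)) (r (Suc m))" using P CS by simp
        have "rk (C (Suc m)) (r (Suc m)) < k" using rk_less[OF w] P less.prems(1) by simp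
        then show ?thesis using less.IH[of "rk (C (Suc m)) (r (Suc m))" "Suc m"] w ext[OF L] by blast
      qed
    qed
  qed
  have "C 0 = c0" unfolding C_def by simp
  then have "\<exists>n. winn n (C 0) (r 0)" using W r0 by simp
  then have "\<exists>n\<ge>1. (\<forall>i\<in>{1..n}. cop_step E 1 (c (i - 1)) (c i)) \<and>
        ((\<exists>i<1. c n i = r (n - 1)) \<or> \<not> robber_step E (c n ` {..<1}) (r (n - 1)) (r n))"
    using main[of 0 "rk (C 0) (r 0)"] by simp
  then show "let c = \<lambda>n. if n = 0 then \<lambda>_. c0 else (\<lambda>h _. foldl nxt c0 h) (map r [0..<n]) in
       \<exists>n\<ge>1. (\<forall>m\<in>{1..n}. cop_step E 1 (c (m - 1)) (c m)) \<and>
         ((\<exists>i<1. c n i = r (n - 1)) \<or> \<not> robber_step E (c n ` {..<1}) (r (n - 1)) (r n))"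
    unfolding Let_def c_def by simp
qed

end


context cgraph begin

lemma tranclp_mono_gen: "R\<^sup>+\<^sup>+ x y \<Longrightarrow> (\<And>a b. R a b \<Longrightarrow> Q a b) \<Longrightarrow> Q\<^sup>+\<^sup>+ x y"
proof (induction rule: tranclp_induct)
  case (base y) then show ?case by blast
next
  case (step y z) then show ?case by (meson tranclp.trancl_into_trancl)
qed

lemma cn_robber: assumes "cn S x y" "S \<inter> C = {}" shows "robber_step E C x y"
proof -
  from rtranclpD[OF assms(1)] show ?thesis
  proof
    assume "x = y" then show ?thesis by (simp add: robber_step_def)
  next
    assume "x \<noteq> y \<and> (induced E S)\<^sup>+\<^sup>+ x y"
    then have "(induced E S)\<^sup>+\<^sup>+ x y" by blast
    then have "(\<lambda>x y. E x y \<and> x \<notin> C \<and> y \<notin> C)\<^sup>+\<^sup>+ x y"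
      by (rule tranclp_mono_gen) (use assms(2) in \<open>auto simp: induced_def\<close>)
    then show ?thesis by (simp add: robber_step_def)
  qed
qed

lemma cn_closed:
  assumes "cn S x y" "x \<in> Z" "\<And>u v. u \<in> Z \<Longrightarrow> induced E S u v \<Longrightarrow> v \<in> Z"
  shows "y \<in> Z"
  using assms(1) proof (induction rule: rtranclp_induct)
  case base then show ?case using assms(2) .
next
  case (step y z) then show ?case using assms(3) by blast
qed

lemma comp_closed:
  assumes "w \<in> V - {a}" "x \<in> comp (V - {a}) w" "E x y" "y \<noteq> a"
  shows "y \<in> comp (V - {a}) w"
proof -
  have xV: "x \<in> V - {a}" using comp_sub[OF assms(1)] assms(2) by blast
  have "y \<in> V - {a}" using assms(3,4) inV by blast
  then have "cn (V - {a}) x y" using cn_edge[OF assms(3) xV] by blast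
  then show ?thesis using assms(2) unfolding comp_def using cn_trans by blast
qed

lemma comp_compl:
  assumes aV: "a \<in> V" and w: "w \<in> V - {a}" and y: "y \<in> V - comp (V - {a}) w"
  shows "cn (V - comp (V - {a}) w) a y"
proof (rule ccontr)
  let ?S = "comp (V - {a}) w"
  let ?T = "comp (V - ?S) a"
  let ?Z = "(V - ?S) - ?T"
  assume "\<not> cn (V - ?S) a y"
  then have yZ: "y \<in> ?Z" using y by (auto simp: comp_def)
  have aS: "a \<notin> ?S" using comp_sub[OF w] by blast
  have aT: "a \<in> ?T" by (rule comp_self)
  have cl: "t \<in> ?Z" if z: "z \<in> ?Z" and e: "induced E V z t" for z t
  proof -
    have zt: "E z t" "t \<in> V" using e by (auto simp: induced_def)
    have tS: "t \<notin> ?S"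
    proof
      assume "t \<in> ?S"
      moreover have "E t z" using zt symE by blast
      moreover have "z \<noteq> a" using z aT by blast
      ultimately have "z \<in> ?S" using comp_closed[OF w] by blast
      then show False using z by blast
    qed
    have tT: "t \<notin> ?T"
    proof
      assume "t \<in> ?T"
      then have "cn (V - ?S) a t" by (simp add: comp_def)
      moreover have "cn (V - ?S) t z"
        using cn_edge[of t z "V - ?S"] zt symE tS z by blast
      ultimately have "z \<in> ?T" unfolding comp_def using cn_trans by blast
      then show False using z by blast
    qed
    show ?thesis using tS tT zt by blast
  qed
  have "cn V y a" using conG y aV by blast
  then have "a \<in> ?Z" using cn_closed[of V y a ?Z] yZ cl by blast
  then show False using aT by blast
qed

lemma nondom_pick:
  assumes B: "blk B" and nd: "\<not> dom_number_one E B" and c: "c \<in> V"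
  shows "\<exists>r\<in>B. r \<noteq> c \<and> \<not> E c r"
proof (cases "c \<in> B")
  case True
  then show ?thesis using nd unfolding dom_number_one_def by blast
next
  case False
  obtain b1 where b1: "b1 \<in> B" using blk_ne[OF B] by blast
  obtain b2 where b2: "b2 \<in> B" "b2 \<noteq> b1" using w2c_two[OF blk_w2c[OF B] b1] by blast
  have "\<not> (E c b1 \<and> E c b2)" using blk_out_nbr[OF B False b1 b2(1)] b2(2) by blast
  then consider "\<not> E c b1" | "\<not> E c b2" by blast
  then show ?thesis
  proof cases
    case 1 moreover have "b1 \<noteq> c" using b1 False by blast
    ultimately show ?thesis using b1 by blast
  next
    case 2 moreover have "b2 \<noteq> c" using b2 False by blast
    ultimately show ?thesis using b2 by blast
  qed
qed

lemma nondom_robber: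
  assumes B: "blk B" and nd: "\<not> dom_number_one E B"
  shows "\<not> cops_win V E 1"
proof (rule robber_wins[where Inv = "\<lambda>c r. c \<in> V \<and> r \<in> B \<and> r \<noteq> c \<and> \<not> E c r"])
  fix c assume "c \<in> V"
  then show "\<exists>r. c \<in> V \<and> r \<in> B \<and> r \<noteq> c \<and> \<not> E c r" using nondom_pick[OF B nd] by blast
next
  fix c r assume "c \<in> V \<and> r \<in> B \<and> r \<noteq> c \<and> \<not> E c r"
  then show "c \<noteq> r \<and> \<not> E c r" by blast
next
  fix c r assume "c \<in> V \<and> r \<in> B \<and> r \<noteq> c \<and> \<not> E c r"
  then show "r \<in> V" using B blk_sub by blast
next
  fix c r c' assume I: "c \<in> V \<and> r \<in> B \<and> r \<noteq> c \<and> \<not> E c r" and st: "c' = c \<or> E c c'"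
  have c'V: "c' \<in> V" using st I inV by blast
  have rc': "r \<noteq> c'" using st I by blast
  obtain r' where r': "r' \<in> B" "r' \<noteq> c'" "\<not> E c' r'" using nondom_pick[OF B nd c'V] by blast
  have "cn (B - {c'}) r r'" using w2c_remove[OF blk_w2c[OF B], of c'] I r' rc'
    by (auto simp: connected_on_def)
  then have "robber_step E {c'} r r'" by (rule cn_robber) blast
  then show "\<exists>r'. robber_step E {c'} r r' \<and> c' \<in> V \<and> r' \<in> B \<and> r' \<noteq> c' \<and> \<not> E c' r'"
    using r' c'V by blast
qed

lemma hall_step:
  assumes B: "blk B" and a: "a \<in> B" and w: "w \<in> B" "w \<noteq> a" "\<not> E a w"
    and w': "w' \<in> V - comp (V - {a}) w"
    and c: "c \<notin> comp (V - {a}) w" and c': "c' \<in> comp (V - {a}) w" and e: "E c c'"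
  shows "robber_step E {c'} w w'"
proof -
  let ?S = "comp (V - {a}) w"
  have wV: "w \<in> V - {a}" using w B blk_sub by blast
  have ca: "c = a"
  proof (rule ccontr)
    assume "c \<noteq> a"
    then have "c \<in> ?S" using comp_closed[OF wV c'] e symE by blast
    then show False using c by blast
  qed
  have c'a: "c' \<noteq> a" using comp_sub[OF wV] c' by blast
  have c'w: "c' \<noteq> w" using e ca w(3) by blast
  have "cn (B - {c'}) w a" using w2c_remove[OF blk_w2c[OF B], of c'] w a c'a c'w
    by (auto simp: connected_on_def)
  moreover have "B - {c'} \<subseteq> V - {c'}" using B blk_sub by blast
  ultimately have p1: "cn (V - {c'}) w a" by (rule cn_mono)
  have aV: "a \<in> V" using a B blk_sub by blast
  have "cn (V - ?S) a w'" using comp_compl[OF aV wV w'] .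
  moreover have "V - ?S \<subseteq> V - {c'}" using c' by blast
  ultimately have p2: "cn (V - {c'}) a w'" by (rule cn_mono)
  have "cn (V - {c'}) w w'" using p1 p2 by (rule cn_trans)
  then show ?thesis by (rule cn_robber) blast
qed

lemma hall_safe:
  assumes B: "blk B" and a: "a \<in> B" and w: "w \<in> B" "w \<noteq> a" "\<not> E a w"
    and c: "c \<notin> comp (V - {a}) w"
  shows "c \<noteq> w \<and> \<not> E c w"
proof -
  have wV: "w \<in> V - {a}" using w B blk_sub by blast
  have "c \<noteq> w" using c comp_self by blast
  moreover have "\<not> E c w"
  proof
    assume e: "E c w"
    show False
    proof (cases "c = a")
      case True then show False using e w(3) by blast
    next
      case False
      then have "c \<in> comp (V - {a}) w" using comp_closed[OF wV comp_self] e symE by blast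
      then show False using c by blast
    qed
  qed
  ultimately show ?thesis by blast
qed

lemma path_rev:
  assumes "block_tree_path V E p X Y"
  shows "block_tree_path V E (rev p) Y X"
proof -
  have "successively (block_tree_adj V E) p" using assms by (simp add: block_tree_path_def)
  then have "successively (\<lambda>x y. block_tree_adj V E y x) p"
    by (rule successively_mono) (use bta_sym in blast)
  then show ?thesis using assms by (auto simp: block_tree_path_def hd_rev last_rev)
qed

lemma hallway_robber:
  assumes "has_hallway V E"
  shows "\<not> cops_win V E 1"
proof -
  obtain B B' p u1 uk where Bb: "is_block V E B" and B'b: "is_block V E B'" and BB': "B \<noteq> B'"
    and p: "block_tree_path V E p (Inl B) (Inl B')" and p1: "p ! 1 = Inr u1"
    and pk: "p ! (length p - 2) = Inr uk"
    and h1: "directed_hole V E B u1" and h2: "directed_hole V E B' uk"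
    using assms unfolding has_hallway_def is_hallway_def by blast
  have B: "blk B" and B': "blk B'" using Bb B'b is_block_blk by blast+
  obtain w where w: "w \<in> B" "w \<noteq> u1" "\<not> E u1 w" and u1: "u1 \<in> B"
    using h1 unfolding directed_hole_def by blast
  obtain w' where w': "w' \<in> B'" "w' \<noteq> uk" "\<not> E uk w'" and uk: "uk \<in> B'"
    using h2 unfolding directed_hole_def by blast
  define S1 where "S1 = comp (V - {u1}) w"
  define S2 where "S2 = comp (V - {uk}) w'"
  have s1: "B' \<inter> S1 = {}" unfolding S1_def using path_sep[OF B BB' p p1 w(1,2)] .
  have pr: "block_tree_path V E (rev p) (Inl B') (Inl B)" using path_rev[OF p] .
  have lp: "length p \<ge> 2"
  proof (rule ccontr)
    assume "\<not> length p \<ge> 2"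
    moreover have "p \<noteq> []" using p by (simp add: block_tree_path_def)
    moreover have "length p \<noteq> 0" using \<open>p \<noteq> []\<close> by simp
    ultimately have "length p = 1" by linarith
    then obtain x where "p = [x]" by (cases p) auto
    then have "hd p = last p" by simp
    moreover have "hd p = Inl B" "last p = Inl B'" using p by (simp_all add: block_tree_path_def)
    ultimately show False using BB' by simp
  qed
  have "rev p ! 1 = p ! (length p - 2)" using lp by (simp add: rev_nth numeral_2_eq_2)
  then have pr1: "rev p ! 1 = Inr uk" using pk by simp
  have s2: "B \<inter> S2 = {}" unfolding S2_def using path_sep[OF B' _ pr pr1 w'(1,2)] BB' by blast
  have w1V: "w \<in> V - {u1}" using w B blk_sub by blast
  have w2V: "w' \<in> V - {uk}" using w' B' blk_sub by blast
  have S1V: "S1 \<subseteq> V - {u1}" unfolding S1_def using comp_sub[OF w1V] .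
  have S2V: "S2 \<subseteq> V - {uk}" unfolding S2_def using comp_sub[OF w2V] .
  have wS1: "w \<in> S1" and wS2: "w' \<in> S2" unfolding S1_def S2_def by (simp_all add: comp_self)
  have disj: "S1 \<inter> S2 = {}"
  proof (cases "u1 = uk")
    case True
    have "w' \<notin> S1" using s1 w' by blast
    then show ?thesis unfolding S1_def S2_def using comp_disj True by blast
  next
    case False
    show ?thesis
    proof (rule ccontr)
      assume "S1 \<inter> S2 \<noteq> {}"
      then obtain z where z: "z \<in> S1" "z \<in> S2" by blast
      have ukS1: "uk \<notin> S1" using s1 uk by blast
      have "cn (V - {u1}) w z" using z unfolding S1_def comp_def by blast
      moreover have "comp (V - {u1}) w \<inter> (V - {u1}) \<subseteq> V - {uk}" using ukS1 unfolding S1_def by blast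
      ultimately have wz: "cn (V - {uk}) w z" by (rule cn_avoid)
      have "B - {u1} \<subseteq> S1"
        unfolding S1_def using connected_sub_comp[OF w2c_remove[OF blk_w2c[OF B]], of u1 "V - {u1}" w w] w B blk_sub comp_self
        by blast
      then have ukB: "uk \<notin> B" using ukS1 False by blast
      have "cn B w u1" using w2c_conn[OF blk_w2c[OF B]] w u1 by (simp add: connected_on_def)
      moreover have "B \<subseteq> V - {uk}" using ukB B blk_sub by blast
      ultimately have wu: "cn (V - {uk}) w u1" by (rule cn_mono)
      have "cn (V - {uk}) w' z" using z unfolding S2_def comp_def by blast
      then have "cn (V - {uk}) w' u1" using wz wu cn_sym cn_trans by blast
      then have "u1 \<in> S2" unfolding S2_def comp_def by blast
      then show False using s2 u1 by blast
    qed
  qed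
  show ?thesis
  proof (rule robber_wins[where Inv = "\<lambda>c r. c \<in> V \<and> ((r = w \<and> c \<notin> S1) \<or> (r = w' \<and> c \<notin> S2))"])
    fix c assume "c \<in> V"
    then show "\<exists>r. c \<in> V \<and> (r = w \<and> c \<notin> S1 \<or> r = w' \<and> c \<notin> S2)" using disj by blast
  next
    fix c r assume "c \<in> V \<and> (r = w \<and> c \<notin> S1 \<or> r = w' \<and> c \<notin> S2)"
    then show "c \<noteq> r \<and> \<not> E c r"
      using hall_safe[OF B u1 w, of c] hall_safe[OF B' uk w', of c] unfolding S1_def S2_def by blast
  next
    fix c r assume "c \<in> V \<and> (r = w \<and> c \<notin> S1 \<or> r = w' \<and> c \<notin> S2)"
    then show "r \<in> V" using w w' B B' blk_sub by blast
  next
    fix c r c' assume I: "c \<in> V \<and> (r = w \<and> c \<notin> S1 \<or> r = w' \<and> c \<notin> S2)" and st: "c' = c \<or> E c c'"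
    have c'V: "c' \<in> V" using st I inV by blast
    have stay: "robber_step E {c'} r r" by (simp add: robber_step_def)
    from I have "(r = w \<and> c \<notin> S1) \<or> (r = w' \<and> c \<notin> S2)" by blast
    then show "\<exists>r'. robber_step E {c'} r r' \<and> c' \<in> V \<and> (r' = w \<and> c' \<notin> S1 \<or> r' = w' \<and> c' \<notin> S2)"
    proof
      assume h: "r = w \<and> c \<notin> S1"
      show ?thesis
      proof (cases "c' \<in> S1")
        case False then show ?thesis using stay h c'V by blast
      next
        case True
        then have e: "E c c'" using st h by blast
        have "w' \<in> V - comp (V - {u1}) w" using w2V wS2 disj unfolding S1_def by blast
        then have "robber_step E {c'} w w'"
          using hall_step[OF B u1 w, of w' c c'] h True e unfolding S1_def by blast
        moreover have "c' \<notin> S2" using True disj by blast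
        ultimately show ?thesis using h c'V by blast
      qed
    next
      assume h: "r = w' \<and> c \<notin> S2"
      show ?thesis
      proof (cases "c' \<in> S2")
        case False then show ?thesis using stay h c'V by blast
      next
        case True
        then have e: "E c c'" using st h by blast
        have "w \<in> V - comp (V - {uk}) w'" using w1V wS1 disj unfolding S2_def by blast
        then have "robber_step E {c'} w' w"
          using hall_step[OF B' uk w', of w c c'] h True e unfolding S2_def by blast
        moreover have "c' \<notin> S1" using True disj by blast
        ultimately show ?thesis using h c'V by blast
      qed
    qed
  qed
qed

end


context cgraph begin

lemma nbr_in_comp:
  assumes v: "v \<in> V" and r: "r \<in> V" "r \<noteq> v"
  shows "\<exists>y\<in>comp (V - {v}) r. E v y"
proof (rule ccontr)
  let ?D = "comp (V - {v}) r"
  assume no: "\<not> (\<exists>y\<in>?D. E v y)"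
  have rD: "r \<in> V - {v}" using r by blast
  have DV: "?D \<subseteq> V - {v}" using comp_sub[OF rD] .
  have cl: "t \<in> ?D" if u: "u \<in> ?D" and e: "induced E V u t" for u t
  proof -
    have ut: "E u t" "t \<in> V" using e by (auto simp: induced_def)
    have tv: "t \<noteq> v"
    proof
      assume "t = v"
      then have "E v u" using ut(1) symE by simp
      then show False using no u by blast
    qed
    have t1: "t \<in> V - {v}" using ut(2) tv by blast
    have u1: "u \<in> V - {v}" using u DV by blast
    have "cn (V - {v}) u t" using cn_edge[OF ut(1) u1 t1] .
    then show ?thesis using u unfolding comp_def using cn_trans by blast
  qed
  have "cn V r v" using conG r v by blast
  then have "v \<in> ?D" using comp_self
  proof (rule cn_closed)
    fix u t assume "u \<in> ?D" "induced E V u t" then show "t \<in> ?D" by (rule cl)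
  qed
  then show False using DV by blast
qed

lemma blk_in_comp:
  assumes B: "blk B" and x: "x \<in> V - {z}" and y: "y \<in> B" "y \<noteq> z" "y \<in> comp (V - {z}) x"
  shows "B - {z} \<subseteq> comp (V - {z}) x"
proof -
  have s: "B - {z} \<subseteq> V - {z}" using B blk_sub by blast
  have yB: "y \<in> B - {z}" using y by blast
  show ?thesis using connected_sub_comp[OF w2c_remove[OF blk_w2c[OF B]] s yB y(3)] .
qed

lemma robber_comp:
  assumes "robber_step E {g} r r'" "r \<in> V - {g}"
  shows "r' \<in> comp (V - {g}) r"
proof -
  from assms(1) consider "r' = r" | "(\<lambda>x y. E x y \<and> x \<notin> {g} \<and> y \<notin> {g})\<^sup>+\<^sup>+ r r'"
    unfolding robber_step_def by blast
  then show ?thesis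
  proof cases
    case 1 then show ?thesis by (simp add: comp_self)
  next
    case 2
    then have "(induced E (V - {g}))\<^sup>+\<^sup>+ r r'"
      by (rule tranclp_mono_gen) (auto simp: induced_def dest: inV)
    then show ?thesis by (simp add: comp_def tranclp_into_rtranclp)
  qed
qed

lemma comp_finite: "finite (comp S x)" if "S \<subseteq> V"
proof -
  have "comp S x \<subseteq> insert x S"
  proof
    fix y assume "y \<in> comp S x"
    then have "cn S x y" by (simp add: comp_def)
    then show "y \<in> insert x S" using cn_in by (cases "x = y") auto
  qed
  moreover have "finite (insert x S)" using that finV finite_subset by auto
  ultimately show ?thesis using finite_subset by blast
qed

lemma card_less:
  assumes "D' \<subseteq> D" "g \<in> D" "g \<notin> D'" "finite D"
  shows "card D' < card D"
proof -
  have "D' \<subset> D" using assms by blast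
  then show ?thesis using psubset_card_mono assms(4) by blast
qed

lemma stepA:
  assumes v: "v \<in> V" and r: "r \<in> V" "r \<noteq> v" "\<not> E v r"
    and B: "blk B" "v \<in> B" and y: "y \<in> B" "y \<noteq> v" "y \<in> comp (V - {v}) r"
    and dom: "\<forall>z\<in>B. z \<noteq> v \<longrightarrow> E v z"
  shows "\<exists>g. g \<in> B \<and> g \<noteq> v \<and> E v g \<and> g \<noteq> r \<and> comp (V - {g}) r \<inter> B = {}
      \<and> comp (V - {g}) r \<subseteq> comp (V - {v}) r \<and> g \<in> comp (V - {v}) r \<and> g \<notin> comp (V - {g}) r
      \<and> r \<in> V - {g}"
proof -
  let ?D = "comp (V - {v}) r"
  have rB: "r \<notin> B" using dom r by blast
  obtain g where g: "g \<in> B" "cn (V - (B - {g})) r g" "comp (V - {g}) r \<inter> B = {}"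
    using gate[OF B(1) r(1) rB] by blast
  let ?D' = "comp (V - {g}) r"
  have gv: "g \<noteq> v"
  proof
    assume "g = v"
    then have "y \<in> ?D' \<inter> B" using y by blast
    then show False using g by blast
  qed
  have Evg: "E v g" using dom g gv by blast
  have gr: "g \<noteq> r" using g rB by blast
  have rg: "r \<in> V - {g}" using r gr by blast
  have sub: "?D' \<subseteq> ?D"
  proof
    fix x assume "x \<in> ?D'"
    then have "cn (V - {g}) r x" by (simp add: comp_def)
    moreover have "?D' \<inter> (V - {g}) \<subseteq> V - {v}" using g B(2) by blast
    ultimately have "cn (V - {v}) r x" by (rule cn_avoid)
    then show "x \<in> ?D" by (simp add: comp_def)
  qed
  have rv: "r \<in> V - {v}" using r by blast
  have "B - {v} \<subseteq> ?D" using blk_in_comp[OF B(1) rv y] .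
  then have gD: "g \<in> ?D" using g gv by blast
  have gD': "g \<notin> ?D'" using comp_sub[OF rg] by blast
  show ?thesis using g gv Evg gr sub gD gD' rg by blast
qed

lemma last_exit:
  assumes "cn S x y"
  shows "x = y \<or> (\<exists>z. E x z \<and> z \<in> S \<and> x \<in> S \<and> cn (S - {x}) z y)"
  using assms
proof (induction rule: rtranclp_induct)
  case base then show ?case by simp
next
  case (step y t)
  have yt: "E y t" "y \<in> S" "t \<in> S" using step(2) by (auto simp: induced_def)
  show ?case
  proof (cases "t = x")
    case True then show ?thesis by simp
  next
    case tx: False
    have direct: ?thesis if "y = x"
    proof -
      have "cn (S - {x}) t t" by simp
      then have "E x t \<and> t \<in> S \<and> x \<in> S \<and> cn (S - {x}) t t" using yt that by simp
      then show ?thesis by blast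
    qed
    from step.IH show ?thesis
    proof
      assume "x = y"
      then show ?thesis using direct by simp
    next
      assume "\<exists>z. E x z \<and> z \<in> S \<and> x \<in> S \<and> cn (S - {x}) z y"
      then obtain z where z: "E x z" "z \<in> S" "x \<in> S" "cn (S - {x}) z y" by blast
      show ?thesis
      proof (cases "y = x")
        case True then show ?thesis using direct by simp
      next
        case False
        have y1: "y \<in> S - {x}" using yt False by blast
        have t1: "t \<in> S - {x}" using yt tx by blast
        have "cn (S - {x}) y t" using cn_edge[OF yt(1) y1 t1] .
        then have "cn (S - {x}) z t" using cn_trans[OF z(4)] by blast
        then have "E x z \<and> z \<in> S \<and> x \<in> S \<and> cn (S - {x}) z t" using z by simp
        then show ?thesis by blast
      qed
    qed
  qed
qed

lemma succ_elem: "successively R q \<Longrightarrow> x \<in> set q \<Longrightarrow> x = hd q \<or> (\<exists>y. R y x)"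
proof (induction q)
  case Nil then show ?case by simp
next
  case (Cons a q)
  show ?case
  proof (cases "x = a")
    case True then show ?thesis by simp
  next
    case False
    then have xq: "x \<in> set q" using Cons by simp
    then have qne: "q \<noteq> []" by auto
    have "successively R q" "R a (hd q)" using Cons.prems(1) qne by (auto simp: successively_Cons)
    then show ?thesis using Cons.IH xq by blast
  qed
qed

end


context cgraph begin

definition good :: "'a \<Rightarrow> 'a \<Rightarrow> bool" where
  "good v r \<longleftrightarrow> (\<forall>B' a. blk B' \<longrightarrow> B' \<inter> comp (V - {v}) r \<noteq> {} \<longrightarrow> a \<in> B' \<longrightarrow>
     (a = v \<or> comp (V - {a}) v \<inter> B' = {}) \<longrightarrow> (\<forall>z\<in>B'. z \<noteq> a \<longrightarrow> E a z))"

lemma good_from_hall: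
  assumes nh: "\<not> has_hallway V E" and B: "blk B" "v \<in> B" and w: "w \<in> B" "w \<noteq> v" "\<not> E v w"
    and r: "r \<in> V" "r \<noteq> v" and disj: "comp (V - {v}) r \<inter> B = {}"
  shows "good v r"
  unfolding good_def
proof (intro allI impI)
  fix B' a
  assume B': "blk B'" and meet: "B' \<inter> comp (V - {v}) r \<noteq> {}" and a: "a \<in> B'"
    and att: "a = v \<or> comp (V - {a}) v \<inter> B' = {}"
  show "\<forall>z\<in>B'. z \<noteq> a \<longrightarrow> E a z"
  proof (rule ccontr)
    assume "\<not> (\<forall>z\<in>B'. z \<noteq> a \<longrightarrow> E a z)"
    then obtain w' where w': "w' \<in> B'" "w' \<noteq> a" "\<not> E a w'" by blast
    let ?D = "comp (V - {v}) r"
    have vV: "v \<in> V" using B blk_sub by blast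
    have rv1: "r \<in> V - {v}" using r by blast
    have DV: "?D \<subseteq> V - {v}" using comp_sub[OF rv1] .
    have BB': "B \<noteq> B'" using meet disj by blast
    have Bi: "is_block V E B" and B'i: "is_block V E B'" using B B' is_block_blk by blast+
    have cutv: "cut_vertex V E v"
    proof -
      have "w \<in> V - {v}" using w B blk_sub by blast
      moreover have "\<not> cn (V - {v}) r w"
      proof
        assume "cn (V - {v}) r w"
        then have "w \<in> ?D \<inter> B" using w by (simp add: comp_def)
        then show False using disj by blast
      qed
      ultimately show ?thesis unfolding cut_vertex_def using vV rv1 by blast
    qed
    have hole1: "directed_hole V E B v" unfolding directed_hole_def using cutv Bi B w by blast
    have aV: "a \<in> V" using a B' blk_sub by blast
    have cuta: "cut_vertex V E a"
    proof (cases "a = v")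
      case True then show ?thesis using cutv by simp
    next
      case False
      then have cmp: "comp (V - {a}) v \<inter> B' = {}" using att by blast
      have "w' \<in> V - {a}" using w' B' blk_sub by blast
      moreover have "v \<in> V - {a}" using vV False by blast
      moreover have "\<not> cn (V - {a}) v w'"
      proof
        assume "cn (V - {a}) v w'"
        then have "w' \<in> comp (V - {a}) v \<inter> B'" using w' by (simp add: comp_def)
        then show False using cmp by blast
      qed
      ultimately show ?thesis unfolding cut_vertex_def using aV by blast
    qed
    have hole2: "directed_hole V E B' a" unfolding directed_hole_def using cuta B'i a w' by blast
    define F :: "('a set + 'a) set" where "F = {Inl B, Inl B'}"
    define R where "R X Y \<longleftrightarrow> block_tree_adj V E X Y \<and> X \<notin> F \<and> Y \<notin> F" for X Y
    have InrF: "Inr x \<notin> F" for x unfolding F_def by simp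
    have RLR: "R (Inl C) (Inr x)" if "blk C" "cut_vertex V E x" "x \<in> C" "C \<noteq> B" "C \<noteq> B'" for C x
      unfolding R_def F_def using that by (simp add: is_block_blk bta_LR)
    have RRL: "R (Inr x) (Inl C)" if "blk C" "cut_vertex V E x" "x \<in> C" "C \<noteq> B" "C \<noteq> B'" for C x
      unfolding R_def F_def using that by (simp add: is_block_blk bta_RL)
    have reach: "R\<^sup>*\<^sup>* (Inr v) (Inr a)"
    proof (cases "a = v")
      case True then show ?thesis by simp
    next
      case av: False
      have cmp: "comp (V - {a}) v \<inter> B' = {}" using att av by blast
      have vB': "v \<notin> B'" using cmp comp_self by blast
      have B'sub: "B' \<subseteq> V - {v}" using B' blk_sub vB' by blast
      obtain b where b: "b \<in> B'" "b \<in> ?D" using meet by blast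
      have B'D: "B' \<subseteq> ?D" using connected_sub_comp[OF w2c_conn[OF blk_w2c[OF B']] B'sub b] .
      have aD: "a \<in> ?D" using B'D a by blast
      obtain g where g: "g \<in> B'" "cn (V - (B' - {g})) v g" "comp (V - {g}) v \<inter> B' = {}"
        using gate[OF B' vV vB'] by blast
      have ga: "g = a"
      proof (rule ccontr)
        assume "g \<noteq> a"
        then have "V - (B' - {g}) \<subseteq> V - {a}" using a by blast
        then have "cn (V - {a}) v g" using cn_mono[OF g(2)] by blast
        then have "g \<in> comp (V - {a}) v \<inter> B'" using g(1) by (simp add: comp_def)
        then show False using cmp by blast
      qed
      let ?S = "V - (B' - {a})"
      have "cn ?S v a" using g(2) ga by simp
      from last_exit[OF this] av obtain z where z: "E v z" "z \<in> ?S" "cn (?S - {v}) z a" by blast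
      let ?S3 = "V - B' - {v}"
      have S3sub: "?S3 \<subseteq> V - {v}" by blast
      have inD: "t \<in> ?D" if "cn (V - {v}) z t" for t
      proof -
        have "?S - {v} \<subseteq> V - {v}" by blast
        then have "cn (V - {v}) z a" using cn_mono[OF z(3)] by blast
        then have az: "cn (V - {v}) a z" by (rule cn_sym)
        have "cn (V - {v}) r a" using aD by (simp add: comp_def)
        then have "cn (V - {v}) r z" using az by (rule cn_trans)
        then have "cn (V - {v}) r t" using that by (rule cn_trans)
        then show ?thesis by (simp add: comp_def)
      qed
      have zD: "z \<in> ?D" using inD by simp
      have notB: "t \<notin> B" if "t \<in> ?D" for t using that disj by blast
      have P: "\<exists>C. blk C \<and> t \<in> C \<and> C \<noteq> B \<and> C \<noteq> B' \<and> R\<^sup>*\<^sup>* (Inr v) (Inl C)"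
        if "cn ?S3 z t" for t
        using that
      proof (induction rule: rtranclp_induct)
        case base
        obtain C0 where C0: "blk C0" "v \<in> C0" "z \<in> C0" using edge_blk[OF z(1)] by blast
        have "C0 \<noteq> B" using C0(3) notB[OF zD] by blast
        moreover have "C0 \<noteq> B'" using C0(2) vB' by blast
        ultimately have "R (Inr v) (Inl C0)" using RRL[OF C0(1) cutv C0(2)] by blast
        then show ?case using C0 \<open>C0 \<noteq> B\<close> \<open>C0 \<noteq> B'\<close> by blast
      next
        case (step t t')
        obtain C where C: "blk C" "t \<in> C" "C \<noteq> B" "C \<noteq> B'" "R\<^sup>*\<^sup>* (Inr v) (Inl C)"
          using step.IH by blast
        have tt: "E t t'" "t' \<in> ?S3" using step(2) by (auto simp: induced_def)
        obtain C' where C': "blk C'" "t \<in> C'" "t' \<in> C'" using edge_blk[OF tt(1)] by blast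
        have "cn ?S3 z t'" using step(1,2) by (rule rtranclp.rtrancl_into_rtrancl)
        then have "cn (V - {v}) z t'" using S3sub by (rule cn_mono)
        then have "t' \<in> ?D" by (rule inD)
        then have C'B: "C' \<noteq> B" using C'(3) notB by blast
        have C'B': "C' \<noteq> B'" using C'(3) tt(2) by blast
        show ?case
        proof (cases "C = C'")
          case True then show ?thesis using C C' by blast
        next
          case False
          have ct: "cut_vertex V E t" using two_blocks_cut[OF C(1) C'(1) False C(2) C'(2)] .
          have "R (Inl C) (Inr t)" using RLR[OF C(1) ct C(2) C(3) C(4)] .
          moreover have "R (Inr t) (Inl C')" using RRL[OF C'(1) ct C'(2) C'B C'B'] .
          ultimately have "R\<^sup>*\<^sup>* (Inr v) (Inl C')" using C(5)
            by (meson rtranclp.rtrancl_into_rtrancl)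
          then show ?thesis using C' C'B C'B' by blast
        qed
      qed
      have fin: "\<exists>C. blk C \<and> a \<in> C \<and> C \<noteq> B \<and> C \<noteq> B' \<and> R\<^sup>*\<^sup>* (Inr v) (Inl C)"
      proof (cases "z = a")
        case True
        have "cn ?S3 z z" by simp
        then show ?thesis using P True by blast
      next
        case za: False
        have "cn (?S - {v}) a z" using z(3) by (rule cn_sym)
        from last_exit[OF this] za obtain t where
          t: "E a t" "t \<in> ?S - {v}" "cn (?S - {v} - {a}) t z" by blast
        have eqS: "?S - {v} - {a} = ?S3" using a by blast
        have "cn ?S3 z t" using t(3) eqS cn_sym by simp
        then obtain C where C: "blk C" "t \<in> C" "C \<noteq> B" "C \<noteq> B'" "R\<^sup>*\<^sup>* (Inr v) (Inl C)"
          using P by blast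
        have ta: "t \<noteq> a" using t(1) irrE by blast
        have tS3: "t \<in> ?S3" using t(2) ta by blast
        have "cn (V - {v}) z t" using \<open>cn ?S3 z t\<close> S3sub by (rule cn_mono)
        then have tB: "t \<notin> B" using inD notB by blast
        have eta: "E t a" using t(1) symE by blast
        obtain Cf where Cf: "blk Cf" "t \<in> Cf" "a \<in> Cf" using edge_blk[OF eta] by blast
        have CfB: "Cf \<noteq> B" using Cf(2) tB by blast
        have CfB': "Cf \<noteq> B'" using Cf(2) tS3 by blast
        show ?thesis
        proof (cases "C = Cf")
          case True then show ?thesis using C Cf by blast
        next
          case False
          have ct: "cut_vertex V E t" using two_blocks_cut[OF C(1) Cf(1) False C(2) Cf(2)] .
          have "R (Inl C) (Inr t)" using RLR[OF C(1) ct C(2) C(3) C(4)] .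
          moreover have "R (Inr t) (Inl Cf)" using RRL[OF Cf(1) ct Cf(2) CfB CfB'] .
          ultimately have "R\<^sup>*\<^sup>* (Inr v) (Inl Cf)" using C(5)
            by (meson rtranclp.rtrancl_into_rtrancl)
          then show ?thesis using Cf CfB CfB' by blast
        qed
      qed
      then obtain C where C: "blk C" "a \<in> C" "C \<noteq> B" "C \<noteq> B'" "R\<^sup>*\<^sup>* (Inr v) (Inl C)" by blast
      have "R (Inl C) (Inr a)" using RLR[OF C(1) cuta C(2) C(3) C(4)] .
      then show ?thesis using C(5) by (meson rtranclp.rtrancl_into_rtrancl)
    qed
    obtain q where q: "q \<noteq> []" "hd q = Inr v" "last q = Inr a" "distinct q" "successively R q"
      using rtranclp_path[OF reach] by blast
    have qF: "x \<notin> F" if "x \<in> set q" for x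
    proof -
      from succ_elem[OF q(5) that] show ?thesis
      proof
        assume "x = hd q" then show ?thesis using q(2) InrF by simp
      next
        assume "\<exists>y. R y x" then show ?thesis unfolding R_def by blast
      qed
    qed
    have qadj: "successively (block_tree_adj V E) q"
      using q(5) by (rule successively_mono) (simp add: R_def)
    define p where "p = Inl B # q @ [Inl B']"
    have a1: "block_tree_adj V E (Inl B) (Inr v)" using Bi cutv B(2) by (simp add: bta_LR)
    have a2: "block_tree_adj V E (Inr a) (Inl B')" using B'i cuta a by (simp add: bta_RL)
    have hdq: "hd (q @ [Inl B']) = Inr v" using q by simp
    have "successively (block_tree_adj V E) (q @ [Inl B'])"
      using qadj a2 q(1,3) by (simp add: successively_append_iff)
    then have sp: "successively (block_tree_adj V E) p"
      unfolding p_def using a1 hdq by (simp add: successively_Cons)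
    have dp: "distinct p" unfolding p_def using q(4) qF BB' unfolding F_def by auto
    have path: "block_tree_path V E p (Inl B) (Inl B')"
      unfolding block_tree_path_def using sp dp by (simp add: p_def)
    have p1: "p ! 1 = Inr v" unfolding p_def using q(1,2) by (simp add: nth_append hd_conv_nth)
    have "p ! (length p - 2) = (q @ [Inl B']) ! (length q - 1)"
      unfolding p_def using q(1) by (cases "length q") auto
    also have "\<dots> = last q" using q(1) by (simp add: nth_append last_conv_nth)
    finally have pk: "p ! (length p - 2) = Inr a" using q(3) by simp
    have "is_hallway V E B B'"
      unfolding is_hallway_def using Bi B'i BB' path p1 pk hole1 hole2 by blast
    then show False using nh unfolding has_hallway_def by blast
  qed
qed

end


context cgraph begin

lemma comp_card_less:
  assumes "D' \<subseteq> comp (V - {v}) r" "g \<in> comp (V - {v}) r" "g \<notin> D'"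
  shows "card D' < card (comp (V - {v}) r)"
proof -
  have "V - {v} \<subseteq> V" by blast
  then have "finite (comp (V - {v}) r)" by (rule comp_finite)
  then show ?thesis using card_less[OF assms(1) assms(2) assms(3)] by blast
qed

lemma goodD:
  assumes "good v r" "blk B'" "B' \<inter> comp (V - {v}) r \<noteq> {}" "a \<in> B'"
    "a = v \<or> comp (V - {a}) v \<inter> B' = {}" "z \<in> B'" "z \<noteq> a"
  shows "E a z"
proof -
  have "\<forall>B' a. blk B' \<longrightarrow> B' \<inter> comp (V - {v}) r \<noteq> {} \<longrightarrow> a \<in> B' \<longrightarrow>
     (a = v \<or> comp (V - {a}) v \<inter> B' = {}) \<longrightarrow> (\<forall>z\<in>B'. z \<noteq> a \<longrightarrow> E a z)"
    using assms(1) unfolding good_def .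
  then have "blk B' \<longrightarrow> B' \<inter> comp (V - {v}) r \<noteq> {} \<longrightarrow> a \<in> B' \<longrightarrow>
     (a = v \<or> comp (V - {a}) v \<inter> B' = {}) \<longrightarrow> (\<forall>z\<in>B'. z \<noteq> a \<longrightarrow> E a z)"
    by (rule spec[of _ a, OF spec[of _ B']])
  then have "\<forall>z\<in>B'. z \<noteq> a \<longrightarrow> E a z" using assms(2-5) by blast
  then show ?thesis using assms(6,7) by blast
qed

lemma good_win:
  assumes "v \<in> V" "r \<in> V" "good v r"
  shows "win v r"
  using assms
proof (induction "card (comp (V - {v}) r)" arbitrary: v r rule: less_induct)
  case less
  show ?case
  proof (cases "v = r \<or> E v r")
    case True then show ?thesis by (rule win.cap)
  next
    case False
    let ?D = "comp (V - {v}) r"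
    have rv: "r \<noteq> v" "\<not> E v r" using False by auto
    obtain y where y: "y \<in> ?D" "E v y" using nbr_in_comp[OF less.prems(1,2) rv(1)] by blast
    have yv: "y \<noteq> v" using y(2) irrE by blast
    obtain B where B: "blk B" "v \<in> B" "y \<in> B" using edge_blk[OF y(2)] by blast
    have "B \<inter> ?D \<noteq> {}" using y B by blast
    then have dom: "\<forall>z\<in>B. z \<noteq> v \<longrightarrow> E v z"
      using goodD[OF less.prems(3) B(1) _ B(2)] by blast
    obtain g where g: "g \<in> B" "g \<noteq> v" "E v g" "g \<noteq> r" "comp (V - {g}) r \<inter> B = {}"
      "comp (V - {g}) r \<subseteq> ?D" "g \<in> ?D" "g \<notin> comp (V - {g}) r" "r \<in> V - {g}"
      using stepA[OF less.prems(1,2) rv B(1,2) B(3) yv y(1) dom] by blast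
    let ?D' = "comp (V - {g}) r"
    have gV: "g \<in> V" using g B blk_sub by blast
    show ?thesis
    proof (rule win.mv[OF g(3) g(4)])
      fix r' assume rs: "robber_step E {g} r r'"
      have r'D: "r' \<in> ?D'" using robber_comp[OF rs g(9)] .
      have eq: "comp (V - {g}) r' = ?D'" using comp_eq[OF r'D] .
      have r'V: "r' \<in> V" using comp_sub[OF g(9)] r'D by blast
      have card: "card (comp (V - {g}) r') < card ?D"
        unfolding eq using comp_card_less[OF g(6) g(7) g(8)] .
      have vD': "v \<notin> ?D'" using g(5) B(2) by blast
      have goodg: "good g r'"
        unfolding good_def
      proof (intro allI impI)
        fix B'' a
        assume B'': "blk B''" and meet: "B'' \<inter> comp (V - {g}) r' \<noteq> {}" and a: "a \<in> B''"
          and att: "a = g \<or> comp (V - {a}) g \<inter> B'' = {}"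
        have meet': "B'' \<inter> ?D' \<noteq> {}" using meet eq by simp
        then obtain b where b: "b \<in> B''" "b \<in> ?D'" by blast
        have bg: "b \<noteq> g" using b(2) g(8) by blast
        have sub: "B'' - {g} \<subseteq> ?D'" using blk_in_comp[OF B'' g(9) b(1) bg b(2)] .
        have vB'': "v \<notin> B''" using sub vD' g(2) by blast
        have meetD: "B'' \<inter> ?D \<noteq> {}" using b g(6) by blast
        have att': "a = v \<or> comp (V - {a}) v \<inter> B'' = {}"
        proof (cases "a = g")
          case True
          have vg: "v \<in> V - {g}" using less.prems(1) g(2) by blast
          have "comp (V - {g}) v \<inter> B'' = {}"
          proof (rule ccontr)
            assume "comp (V - {g}) v \<inter> B'' \<noteq> {}"
            then obtain z where z: "z \<in> comp (V - {g}) v" "z \<in> B''" by blast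
            have "z \<noteq> g" using comp_sub[OF vg] z(1) by blast
            then have zD': "z \<in> ?D'" using sub z(2) by blast
            have "comp (V - {g}) z = comp (V - {g}) v" using comp_eq[OF z(1)] .
            moreover have "comp (V - {g}) z = ?D'" using comp_eq[OF zD'] .
            ultimately have "v \<in> ?D'" using comp_self[of v "V - {g}"] by simp
            then show False using vD' by blast
          qed
          then show ?thesis using True by simp
        next
          case ag: False
          then have cmp: "comp (V - {a}) g \<inter> B'' = {}" using att by blast
          have av: "a \<noteq> v" using a vB'' by blast
          have v1: "v \<in> V - {a}" using less.prems(1) av by blast
          have g1: "g \<in> V - {a}" using gV ag by blast
          have "cn (V - {a}) v g" using cn_edge[OF g(3) v1 g1] .
          then have "g \<in> comp (V - {a}) v" by (simp add: comp_def)
          then have "comp (V - {a}) g = comp (V - {a}) v" by (rule comp_eq)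
          then show ?thesis using cmp by simp
        qed
        show "\<forall>z\<in>B''. z \<noteq> a \<longrightarrow> E a z"
          using goodD[OF less.prems(3) B'' meetD a att'] by blast
      qed
      show "win g r'" using less.hyps[OF card gV r'V goodg] .
    qed
  qed
qed

lemma cop_main:
  assumes domall: "\<forall>B. blk B \<longrightarrow> dom_number_one E B" and nh: "\<not> has_hallway V E"
  shows "v \<in> V \<Longrightarrow> r \<in> V \<Longrightarrow> win v r"
proof (induction "card (comp (V - {v}) r)" arbitrary: v r rule: less_induct)
  case less
  show ?case
  proof (cases "v = r \<or> E v r")
    case True then show ?thesis by (rule win.cap)
  next
    case False
    let ?D = "comp (V - {v}) r"
    have rv: "r \<noteq> v" "\<not> E v r" using False by auto
    have rv1: "r \<in> V - {v}" using less.prems rv by blast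
    obtain y where y: "y \<in> ?D" "E v y" using nbr_in_comp[OF less.prems(1,2) rv(1)] by blast
    have yv: "y \<noteq> v" using y(2) irrE by blast
    obtain B where B: "blk B" "v \<in> B" "y \<in> B" using edge_blk[OF y(2)] by blast
    have BD: "B - {v} \<subseteq> ?D" using blk_in_comp[OF B(1) rv1 B(3) yv y(1)] .
    show ?thesis
    proof (cases "\<forall>z\<in>B. z \<noteq> v \<longrightarrow> E v z")
      case True
      obtain g where g: "g \<in> B" "g \<noteq> v" "E v g" "g \<noteq> r" "comp (V - {g}) r \<inter> B = {}"
        "comp (V - {g}) r \<subseteq> ?D" "g \<in> ?D" "g \<notin> comp (V - {g}) r" "r \<in> V - {g}"
        using stepA[OF less.prems(1,2) rv B(1,2) B(3) yv y(1) True] by blast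
      have gV: "g \<in> V" using g B blk_sub by blast
      show ?thesis
      proof (rule win.mv[OF g(3) g(4)])
        fix r' assume rs: "robber_step E {g} r r'"
        have r'D: "r' \<in> comp (V - {g}) r" using robber_comp[OF rs g(9)] .
        have eq: "comp (V - {g}) r' = comp (V - {g}) r" using comp_eq[OF r'D] .
        have r'V: "r' \<in> V" using comp_sub[OF g(9)] r'D by blast
        have card: "card (comp (V - {g}) r') < card ?D"
          unfolding eq using comp_card_less[OF g(6) g(7) g(8)] .
        show "win g r'" using less.hyps[OF card gV r'V] .
      qed
    next
      case False
      then obtain w where w: "w \<in> B" "w \<noteq> v" "\<not> E v w" by blast
      obtain x where x: "x \<in> B" "\<forall>z\<in>B. z \<noteq> x \<longrightarrow> E x z"
        using domall B(1) unfolding dom_number_one_def by blast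
      have xv: "x \<noteq> v" using x w by blast
      have vx: "v \<noteq> x" using xv by simp
      have "E x v" using bspec[OF x(2) B(2)] vx by simp
      then have Evx: "E v x" by (rule symE)
      have xr: "x \<noteq> r" using Evx rv by blast
      have xV: "x \<in> V" using x B blk_sub by blast
      have xD: "x \<in> ?D" using BD x xv by blast
      have rx1: "r \<in> V - {x}" using less.prems(2) xr by blast
      show ?thesis
      proof (rule win.mv[OF Evx xr])
        fix r' assume rs: "robber_step E {x} r r'"
        have r'Dx: "r' \<in> comp (V - {x}) r" using robber_comp[OF rs rx1] .
        have r'x1: "r' \<in> V - {x}" using comp_sub[OF rx1] r'Dx by blast
        then have r'V: "r' \<in> V" by blast
        show "win x r'"
        proof (cases "x = r' \<or> E x r'")
          case True then show ?thesis by (rule win.cap)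
        next
          case nc: False
          have r'B: "r' \<notin> B"
          proof
            assume "r' \<in> B"
            moreover have "r' \<noteq> x" using nc by auto
            ultimately have "E x r'" using x(2) by simp
            then show False using nc by simp
          qed
          obtain g' where g': "g' \<in> B" "cn (V - (B - {g'})) r' g'" "comp (V - {g'}) r' \<inter> B = {}"
            using gate[OF B(1) r'V r'B] by blast
          show ?thesis
          proof (cases "g' = x")
            case True
            let ?Dx = "comp (V - {x}) r'"
            have eqx: "?Dx = comp (V - {x}) r" using comp_eq[OF r'Dx] .
            have dx: "?Dx \<inter> B = {}" using g'(3) True by simp
            have sub: "?Dx \<subseteq> ?D"
            proof
              fix z assume "z \<in> ?Dx"
              then have "z \<in> comp (V - {x}) r" using eqx by simp
              then have "cn (V - {x}) r z" by (simp add: comp_def)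
              moreover have "comp (V - {x}) r \<inter> (V - {x}) \<subseteq> V - {v}" using dx eqx B(2) by blast
              ultimately have "cn (V - {v}) r z" by (rule cn_avoid)
              then show "z \<in> ?D" by (simp add: comp_def)
            qed
            have "x \<notin> ?Dx" using comp_sub[OF r'x1] by blast
            then have card: "card ?Dx < card ?D" using comp_card_less[OF sub xD] by blast
            show ?thesis using less.hyps[OF card xV r'V] .
          next
            case gx: False
            have Exg: "E x g'" using x(2) g'(1) gx by blast
            have gr: "g' \<noteq> r'" using g'(1) r'B by blast
            have g'V: "g' \<in> V" using g' B blk_sub by blast
            have r'g1: "r' \<in> V - {g'}" using r'V gr by blast
            show ?thesis
            proof (rule win.mv[OF Exg gr])
              fix r'' assume rs2: "robber_step E {g'} r' r''"
              have r''D: "r'' \<in> comp (V - {g'}) r'" using robber_comp[OF rs2 r'g1] .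
              have eq2: "comp (V - {g'}) r'' = comp (V - {g'}) r'" using comp_eq[OF r''D] .
              have r''V: "r'' \<in> V" using comp_sub[OF r'g1] r''D by blast
              show "win g' r''"
              proof (cases "g' = v")
                case True
                have r''v: "r'' \<noteq> v" using comp_sub[OF r'g1] r''D True by blast
                have dj: "comp (V - {v}) r'' \<inter> B = {}" using eq2 g'(3) True by simp
                have "good v r''"
                  using good_from_hall[OF nh B(1,2) w r''V r''v dj] .
                then have "win v r''" using good_win less.prems(1) r''V by blast
                then show ?thesis using True by simp
              next
                case gv: False
                let ?D'' = "comp (V - {g'}) r'"
                have "V - (B - {g'}) \<subseteq> V - {v}" using B(2) gv by blast
                then have "cn (V - {v}) r' g'" using cn_mono[OF g'(2)] by blast
                moreover have "g' \<in> ?D" using BD g'(1) gv by blast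
                ultimately have r'D: "r' \<in> ?D" unfolding comp_def using cn_sym cn_trans by blast
                have sub: "?D'' \<subseteq> ?D"
                proof
                  fix z assume "z \<in> ?D''"
                  then have "cn (V - {g'}) r' z" by (simp add: comp_def)
                  moreover have "?D'' \<inter> (V - {g'}) \<subseteq> V - {v}" using g'(3) B(2) by blast
                  ultimately have "cn (V - {v}) r' z" by (rule cn_avoid)
                  then have "z \<in> comp (V - {v}) r'" by (simp add: comp_def)
                  then show "z \<in> ?D" using comp_eq[OF r'D] by simp
                qed
                have "g' \<notin> ?D''" using comp_sub[OF r'g1] by blast
                then have "card ?D'' < card ?D" using comp_card_less[OF sub \<open>g' \<in> ?D\<close>] by blast
                then have card: "card (comp (V - {g'}) r'') < card ?D" using eq2 by simp
                show ?thesis using less.hyps[OF card g'V r''V] .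
              qed
            qed
          qed
        qed
      qed
    qed
  qed
qed

end


theorem mainTheorem1:
  fixes V :: "'a set" and E :: "'a \<Rightarrow> 'a \<Rightarrow> bool"
  assumes "simple_graph V E" and "connected_graph V E"
  shows "c_inf V E = 1 \<longleftrightarrow>
           (\<forall>B. is_block V E B \<longrightarrow> dom_number_one E B) \<and> \<not> has_hallway V E"
proof -
  have sg: "finite V" "\<And>x y. E x y \<Longrightarrow> x \<in> V \<and> y \<in> V" "\<And>x y. E x y \<Longrightarrow> E y x" "\<And>x. \<not> E x x"
    using assms(1) unfolding simple_graph_def by blast+
  have cg: "V \<noteq> {}" "\<And>x y. x \<in> V \<Longrightarrow> y \<in> V \<Longrightarrow> (induced E V)\<^sup>*\<^sup>* x y"
    using assms(2) unfolding connected_graph_def connected_on_def by blast+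
  interpret cgraph V E
    by (unfold_locales) (use sg cg in blast)+
  have eq: "c_inf V E = 1 \<longleftrightarrow> cops_win V E 1" using c_inf_1[OF sg(1) cg(1)] .
  show ?thesis
  proof
    assume "c_inf V E = 1"
    then have cw: "cops_win V E 1" using eq by simp
    have "dom_number_one E B" if "is_block V E B" for B
    proof (rule ccontr)
      assume "\<not> dom_number_one E B"
      moreover have "blk B" using that is_block_blk by blast
      ultimately have "\<not> cops_win V E 1" using nondom_robber by blast
      then show False using cw by blast
    qed
    moreover have "\<not> has_hallway V E" using hallway_robber cw by blast
    ultimately show "(\<forall>B. is_block V E B \<longrightarrow> dom_number_one E B) \<and> \<not> has_hallway V E" by blast
  next
    assume h: "(\<forall>B. is_block V E B \<longrightarrow> dom_number_one E B) \<and> \<not> has_hallway V E"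
    have domall: "\<forall>B. blk B \<longrightarrow> dom_number_one E B" using h is_block_blk by blast
    have nh: "\<not> has_hallway V E" using h by blast
    obtain c0 where c0: "c0 \<in> V" using cg(1) by blast
    have "\<exists>n. winn n c0 r" if "r \<in> V" for r
      using win_winn[OF cop_main[OF domall nh c0 that]] .
    then have "cops_win V E 1" using cop_wins[OF c0] by blast
    then show "c_inf V E = 1" using eq by simp
  qed
qed


end
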